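(* Let $n\ge1$, let $G=D_n$ be the dihedral group of order $2n$, and let $H\le G$ be any subgroup. If $H$ contains a Klein subgroup of $G$, then the restriction map $\operatorname{Res}:H^3(G,\mathbb{Z})\to H^3(H,\mathbb{Z})$ is injective (indeed an isomorphism, both groups being $\mathbb{Z}/2\mathbb{Z}$). If $H$ does not contain a Klein subgroup of $G$, then $\operatorname{Res}:H^3(G,\mathbb{Z})\to H^3(H,\mathbb{Z})$ is the zero map.
   Context: $D_n=\langle r,s\mid r^n=s^2=e,\ srs=r^{-1}\rangle$. A Klein subgroup of $G$ is a subgroup isomorphic to $\mathbb{Z}/2\mathbb{Z}\times\mathbb{Z}/2\mathbb{Z}$. $\mathbb{Z}$ is the trivial $G$-module. *)

theory Defs
  imports "HOL-Algebra.Algebra"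
begin

text \<open>Dihedral group D_n of order 2n: the pair (k,b) stands for r^k s^b (b = True meaning s^1),
  with 0 \<le> k < n.  Multiplication uses s r s = r^-1.\<close>
definition dihedral :: "nat \<Rightarrow> (int \<times> bool) monoid" where
  "dihedral n = \<lparr> carrier = {(k, b). 0 \<le> k \<and> k < int n},
     monoid.mult = (\<lambda>(k1, b1) (k2, b2). ((k1 + (if b1 then - k2 else k2)) mod int n, b1 \<noteq> b2)),
     one = (0, False) \<rparr>"

definition klein4 :: "(bool \<times> bool) monoid" where
  "klein4 = \<lparr> carrier = UNIV, monoid.mult = (\<lambda>(a, b) (c, d). (a \<noteq> c, b \<noteq> d)), one = (False, False) \<rparr>"

definition klein_subgroup :: "('a, 'b) monoid_scheme \<Rightarrow> 'a set \<Rightarrow> bool" where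
  "klein_subgroup G K \<longleftrightarrow> subgroup K G \<and> G\<lparr>carrier := K\<rparr> \<cong> klein4"

text \<open>Group cohomology with coefficients in the trivial module Z, via the standard
  inhomogeneous cochain complex: n-cochains are functions on n-tuples (lists of length n)
  of group elements with values in int.\<close>
definition tuples :: "('a, 'b) monoid_scheme \<Rightarrow> nat \<Rightarrow> 'a list set" where
  "tuples G n = {xs. length xs = n \<and> set xs \<subseteq> carrier G}"

definition cobound :: "('a, 'b) monoid_scheme \<Rightarrow> nat \<Rightarrow> ('a list \<Rightarrow> int) \<Rightarrow> 'a list \<Rightarrow> int" where
  "cobound G n f xs =
     f (tl xs)
     + (\<Sum>i\<in>{1..n}. (-1) ^ i * f (take (i - 1) xs @ [xs ! (i - 1) \<otimes>\<^bsub>G\<^esub> xs ! i] @ drop (i + 1) xs))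
     + (-1) ^ (n + 1) * f (butlast xs)"

definition cocycle :: "('a, 'b) monoid_scheme \<Rightarrow> nat \<Rightarrow> ('a list \<Rightarrow> int) \<Rightarrow> bool" where
  "cocycle G n f \<longleftrightarrow> (\<forall>xs \<in> tuples G (Suc n). cobound G n f xs = 0)"

definition coboundary :: "('a, 'b) monoid_scheme \<Rightarrow> nat \<Rightarrow> ('a list \<Rightarrow> int) \<Rightarrow> bool" where
  "coboundary G n f \<longleftrightarrow>
     (case n of 0 \<Rightarrow> (\<forall>xs \<in> tuples G 0. f xs = 0)
      | Suc m \<Rightarrow> (\<exists>h. \<forall>xs \<in> tuples G n. f xs = cobound G m h xs))"

text \<open>Since cochains are just functions, restriction is the identity on representatives,
  evaluated on the smaller tuple set of G(carrier := H).\<close>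
definition res_injective :: "('a, 'b) monoid_scheme \<Rightarrow> 'a set \<Rightarrow> nat \<Rightarrow> bool" where
  "res_injective G H n \<longleftrightarrow>
     (\<forall>f. cocycle G n f \<and> coboundary (G\<lparr>carrier := H\<rparr>) n f \<longrightarrow> coboundary G n f)"

definition res_surjective :: "('a, 'b) monoid_scheme \<Rightarrow> 'a set \<Rightarrow> nat \<Rightarrow> bool" where
  "res_surjective G H n \<longleftrightarrow>
     (\<forall>c. cocycle (G\<lparr>carrier := H\<rparr>) n c \<longrightarrow>
        (\<exists>f. cocycle G n f \<and> coboundary (G\<lparr>carrier := H\<rparr>) n (\<lambda>xs. c xs - f xs)))"

definition res_zero :: "('a, 'b) monoid_scheme \<Rightarrow> 'a set \<Rightarrow> nat \<Rightarrow> bool" where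
  "res_zero G H n \<longleftrightarrow> (\<forall>f. cocycle G n f \<longrightarrow> coboundary (G\<lparr>carrier := H\<rparr>) n f)"

end

theory Submission
  imports Defs
begin


lemma cobound2_eq: "cobound G 2 h [a,b,c] = h [b,c] - h [a \<otimes>\<^bsub>G\<^esub> b, c] + h [a, b \<otimes>\<^bsub>G\<^esub> c] - h [a,b]"
  by (simp add: cobound_def numeral_2_eq_2)

lemma cobound3_eq: "cobound G 3 f [a,b,c,e] = f [b,c,e] - f [a \<otimes>\<^bsub>G\<^esub> b, c, e] + f [a, b \<otimes>\<^bsub>G\<^esub> c, e] - f [a, b, c \<otimes>\<^bsub>G\<^esub> e] + f [a,b,c]"
  by (simp add: cobound_def numeral_3_eq_3)

lemma tuples3: "xs \<in> tuples G 3 \<longleftrightarrow> (\<exists>a b c. xs = [a,b,c] \<and> a \<in> carrier G \<and> b \<in> carrier G \<and> c \<in> carrier G)"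
  apply (simp add: tuples_def)
  apply (cases xs; simp; rename_tac xs'; case_tac xs'; simp; rename_tac xs''; case_tac xs''; simp)
  apply auto
  done

lemma tuples4: "xs \<in> tuples G 4 \<longleftrightarrow> (\<exists>a b c e. xs = [a,b,c,e] \<and> a \<in> carrier G \<and> b \<in> carrier G \<and> c \<in> carrier G \<and> e \<in> carrier G)"
  apply (simp add: tuples_def)
  apply (cases xs; simp; rename_tac xs'; case_tac xs'; simp; rename_tac xs''; case_tac xs''; simp; rename_tac x3; case_tac x3; simp)
  apply auto
  done

lemma coboundary3: "coboundary S 3 f \<longleftrightarrow> (\<exists>h. \<forall>xs\<in>tuples S 3. f xs = cobound S 2 h xs)"
  by (simp add: coboundary_def eval_nat_numeral)

lemma cocycle3: "cocycle S 3 f \<longleftrightarrow> (\<forall>xs\<in>tuples S 4. cobound S 3 f xs = 0)"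
  by (simp add: cocycle_def)


definition d2r :: "('a,'b) monoid_scheme \<Rightarrow> ('a \<Rightarrow> 'a \<Rightarrow> real) \<Rightarrow> 'a \<Rightarrow> 'a \<Rightarrow> 'a \<Rightarrow> real" where
  "d2r S u a b c = u b c - u (a \<otimes>\<^bsub>S\<^esub> b) c + u a (b \<otimes>\<^bsub>S\<^esub> c) - u a b"

definition splits :: "('a,'b) monoid_scheme \<Rightarrow> ('a \<Rightarrow> 'a \<Rightarrow> real) \<Rightarrow> bool" where
  "splits S u \<longleftrightarrow> (\<exists>\<kappa>. \<forall>a\<in>carrier S. \<forall>b\<in>carrier S. u a b + \<kappa> a + \<kappa> b - \<kappa> (a \<otimes>\<^bsub>S\<^esub> b) \<in> \<int>)"

lemma (in group) sum_lmult:
  assumes "c \<in> carrier G"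
  shows "(\<Sum>g\<in>carrier G. F (c \<otimes> g)) = (\<Sum>g\<in>carrier G. F g)"
proof -
  have im: "(\<lambda>x. c \<otimes> x) ` carrier G = carrier G"
  proof
    show "(\<lambda>x. c \<otimes> x) ` carrier G \<subseteq> carrier G" using assms by auto
    show "carrier G \<subseteq> (\<lambda>x. c \<otimes> x) ` carrier G"
    proof
      fix y assume y: "y \<in> carrier G"
      have "y = c \<otimes> (inv c \<otimes> y)" using assms y by (simp add: m_assoc[symmetric])
      thus "y \<in> (\<lambda>x. c \<otimes> x) ` carrier G" using assms y by blast
    qed
  qed
  have "(\<Sum>g\<in>carrier G. F g) = (\<Sum>g\<in>(\<lambda>x. c \<otimes> x) ` carrier G. F g)" by (simp add: im)
  also have "\<dots> = (\<Sum>g\<in>carrier G. F (c \<otimes> g))"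
    by (rule sum.reindex[OF inj_on_cmult[OF assms], unfolded comp_def])
  finally show ?thesis by simp
qed

lemma lemmaB:
  assumes grp: "group S" and fin: "finite (carrier S)" and coc: "cocycle S 3 f"
  shows "\<exists>u. \<forall>a\<in>carrier S. \<forall>b\<in>carrier S. \<forall>c\<in>carrier S. d2r S u a b c = f [a,b,c]"
proof -
  interpret group S by (rule grp)
  define N where "N = real (card (carrier S))"
  have Npos: "N > 0" unfolding N_def using fin one_closed card_gt_0_iff by fastforce
  define h where "h a b = (\<Sum>g\<in>carrier S. real_of_int (f [a,b,g]))" for a b
  define u where "u a b = - h a b / N" for a b
  have key: "h b c - h (a \<otimes>\<^bsub>S\<^esub> b) c + h a (b \<otimes>\<^bsub>S\<^esub> c) - h a b + N * f [a,b,c] = 0"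
    if abc: "a \<in> carrier S" "b \<in> carrier S" "c \<in> carrier S" for a b c
  proof -
    have z: "real_of_int (f [b,c,g]) - f [a \<otimes>\<^bsub>S\<^esub> b, c, g] + f [a, b \<otimes>\<^bsub>S\<^esub> c, g] - f [a, b, c \<otimes>\<^bsub>S\<^esub> g] + f [a,b,c] = 0"
      if "g \<in> carrier S" for g
    proof -
      have "[a,b,c,g] \<in> tuples S 4" using abc that by (simp add: tuples4)
      hence "cobound S 3 f [a,b,c,g] = 0" using coc by (simp add: cocycle_def)
      thus ?thesis by (simp add: cobound3_eq)
    qed
    have s: "(\<Sum>g\<in>carrier S. real_of_int (f [a, b, c \<otimes>\<^bsub>S\<^esub> g])) = h a b"
      unfolding h_def by (rule sum_lmult[OF abc(3)])
    have "(\<Sum>g\<in>carrier S. real_of_int (f [b,c,g]) - f [a \<otimes>\<^bsub>S\<^esub> b, c, g] + f [a, b \<otimes>\<^bsub>S\<^esub> c, g] - f [a, b, c \<otimes>\<^bsub>S\<^esub> g] + f [a,b,c]) = 0"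
      using z by simp
    hence "(\<Sum>g\<in>carrier S. real_of_int (f [b,c,g])) - (\<Sum>g\<in>carrier S. real_of_int (f [a \<otimes>\<^bsub>S\<^esub> b, c, g]))
       + (\<Sum>g\<in>carrier S. real_of_int (f [a, b \<otimes>\<^bsub>S\<^esub> c, g])) - (\<Sum>g\<in>carrier S. real_of_int (f [a, b, c \<otimes>\<^bsub>S\<^esub> g]))
       + (\<Sum>g\<in>carrier S. real_of_int (f [a,b,c])) = 0"
      by (simp only: sum.distrib sum_subtractf)
    thus ?thesis using s unfolding h_def N_def by simp
  qed
  show ?thesis
  proof (intro exI ballI)
    fix a b c assume abc: "a \<in> carrier S" "b \<in> carrier S" "c \<in> carrier S"
    have "d2r S u a b c = - (h b c - h (a \<otimes>\<^bsub>S\<^esub> b) c + h a (b \<otimes>\<^bsub>S\<^esub> c) - h a b) / N"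
      unfolding d2r_def u_def using Npos by (simp add: field_simps)
    also have "\<dots> = f [a,b,c]" using key[OF abc] Npos by (simp add: field_simps)
    finally show "d2r S u a b c = f [a,b,c]" .
  qed
qed

lemma lemmaA1:
  assumes prim: "\<forall>a\<in>carrier S. \<forall>b\<in>carrier S. \<forall>c\<in>carrier S. d2r S u a b c = f [a,b,c]"
    and spl: "splits S u"
  assumes grp: "group S"
  shows "coboundary S 3 f"
proof -
  obtain \<kappa> where k: "\<forall>a\<in>carrier S. \<forall>b\<in>carrier S. u a b + \<kappa> a + \<kappa> b - \<kappa> (a \<otimes>\<^bsub>S\<^esub> b) \<in> \<int>"
    using spl unfolding splits_def by blast
  define w where "w xs = \<lfloor>u (xs!0) (xs!1) + \<kappa> (xs!0) + \<kappa> (xs!1) - \<kappa> (xs!0 \<otimes>\<^bsub>S\<^esub> xs!1)\<rfloor>" for xs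
  have wv: "real_of_int (w [a,b]) = u a b + \<kappa> a + \<kappa> b - \<kappa> (a \<otimes>\<^bsub>S\<^esub> b)"
    if "a \<in> carrier S" "b \<in> carrier S" for a b
  proof -
    have "u a b + \<kappa> a + \<kappa> b - \<kappa> (a \<otimes>\<^bsub>S\<^esub> b) \<in> \<int>" using k that by blast
    then obtain z where z: "u a b + \<kappa> a + \<kappa> b - \<kappa> (a \<otimes>\<^bsub>S\<^esub> b) = of_int z" by (auto elim: Ints_cases)
    show ?thesis unfolding w_def by (simp add: z)
  qed
  show ?thesis unfolding coboundary3
  proof (intro exI ballI)
    fix xs assume "xs \<in> tuples S 3"
    then obtain a b c where xs: "xs = [a,b,c]" "a \<in> carrier S" "b \<in> carrier S" "c \<in> carrier S"
      unfolding tuples3 by blast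
    interpret group S by (rule grp)
    have c1: "a \<otimes>\<^bsub>S\<^esub> b \<in> carrier S" "b \<otimes>\<^bsub>S\<^esub> c \<in> carrier S" using xs by auto
    have "real_of_int (cobound S 2 w [a,b,c]) = d2r S u a b c"
      unfolding cobound2_eq d2r_def using wv[of b c] wv[of a "b \<otimes>\<^bsub>S\<^esub> c"] wv[of "a \<otimes>\<^bsub>S\<^esub> b" c] wv[of a b] xs c1 by (simp add: m_assoc)
    also have "\<dots> = f [a,b,c]" using prim xs by simp
    finally show "f xs = cobound S 2 w xs" using xs by simp
  qed
qed


lemma fracEq: "frac x = frac y \<longleftrightarrow> x - y \<in> \<int>"
proof
  assume "frac x = frac y"
  hence "x - y = of_int (\<lfloor>x\<rfloor> - \<lfloor>y\<rfloor>)" by (simp add: frac_def algebra_simps)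
  thus "x - y \<in> \<int>" by simp
next
  assume "x - y \<in> \<int>"
  then obtain k where "x - y = of_int k" by (auto elim: Ints_cases)
  hence "x = y + of_int k" by simp
  thus "frac x = frac y" by simp
qed

lemma fr_cong: "x - y \<in> \<int> \<Longrightarrow> frac x = frac y" by (simp add: fracEq)

lemma frac_frac_add: "frac (frac a + b) = frac (a + b)"
  by (rule fr_cong) (simp add: frac_def)

lemma frac_add_frac: "frac (b + frac a) = frac (b + a)"
  by (rule fr_cong) (simp add: frac_def)

lemma (in group) conj_pow:
  assumes T: "T \<in> carrier G" "T \<otimes> T = \<one>" and x: "x \<in> carrier G"
  shows "T \<otimes> x [^] (k::int) \<otimes> T = (T \<otimes> x \<otimes> T) [^] k"
proof -
  have h: "(\<lambda>y. T \<otimes> y \<otimes> T) \<in> hom G G"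
  proof (rule homI)
    fix a b assume ab: "a \<in> carrier G" "b \<in> carrier G"
    have TTz: "T \<otimes> (T \<otimes> z) = z" if "z \<in> carrier G" for z
      using T that by (simp add: m_assoc[symmetric])
    show "T \<otimes> (a \<otimes> b) \<otimes> T = (T \<otimes> a \<otimes> T) \<otimes> (T \<otimes> b \<otimes> T)"
      using T ab by (simp add: m_assoc TTz)
  qed (use T in auto)
  show ?thesis using hom_int_pow[OF h x is_group is_group] by simp
qed

lemma (in group) pow_mod_int:
  assumes x: "x \<in> carrier G" and xm: "x [^] (m::nat) = \<one>"
  shows "x [^] (a::int) = x [^] (a mod int m)"
proof -
  have "a = int m * (a div int m) + a mod int m" by simp
  hence "x [^] a = x [^] (int m * (a div int m)) \<otimes> x [^] (a mod int m)"
    by (metis int_pow_mult x)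
  also have "x [^] (int m * (a div int m)) = \<one>"
    using x xm by (simp add: int_pow_pow[symmetric] int_pow_int)
  finally show ?thesis using x by simp
qed

lemma (in group) pow_mod_nat:
  assumes x: "x \<in> carrier G" and xm: "x [^] (m::nat) = \<one>"
  shows "x [^] (a::nat) = x [^] (a mod m)"
proof -
  have "a = m * (a div m) + a mod m" by simp
  hence "x [^] a = x [^] (m * (a div m)) \<otimes> x [^] (a mod m)"
    by (metis nat_pow_mult x)
  also have "x [^] (m * (a div m)) = \<one>"
    using x xm by (simp add: nat_pow_pow[symmetric])
  finally show ?thesis using x by simp
qed

lemma (in group) dih_mult:
  assumes Y: "Y \<in> carrier G" and T: "T \<in> carrier G" and Ym: "Y [^] (m::nat) = \<one>"
    and TT: "T \<otimes> T = \<one>" and TY: "T \<otimes> Y \<otimes> T \<otimes> Y = \<one>"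
  shows "(Y [^] (i::int) \<otimes> (if e then T else \<one>)) \<otimes> (Y [^] (j::int) \<otimes> (if f then T else \<one>))
       = Y [^] ((i + (if e then -j else j)) mod int m) \<otimes> (if e \<noteq> f then T else \<one>)"
proof -
  have inv: "inv Y = T \<otimes> Y \<otimes> T" using TY Y T by (intro inv_equality) auto
  have c0: "T \<otimes> Y [^] j \<otimes> T = (inv Y) [^] j"
    using conj_pow[OF T TT Y, of j] inv by simp
  have c: "T \<otimes> Y [^] j \<otimes> T = Y [^] (-j)"
    unfolding c0 using Y by (simp add: int_pow_inv int_pow_neg)
  have c2: "T \<otimes> Y [^] j = Y [^] (-j) \<otimes> T"
  proof -
    have "Y [^] (-j) \<otimes> T = (T \<otimes> Y [^] j \<otimes> T) \<otimes> T" using c by simp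
    also have "\<dots> = T \<otimes> Y [^] j \<otimes> (T \<otimes> T)" using T Y by (simp add: m_assoc)
    finally have "Y [^] (-j) \<otimes> T = T \<otimes> Y [^] j \<otimes> (T \<otimes> T)" .
    thus ?thesis using TT T Y by simp
  qed
  show ?thesis
  proof (cases e)
    case True
    have "(Y [^] i \<otimes> T) \<otimes> (Y [^] j \<otimes> (if f then T else \<one>)) = Y [^] i \<otimes> (T \<otimes> Y [^] j) \<otimes> (if f then T else \<one>)"
      using Y T by (simp add: m_assoc)
    also have "\<dots> = Y [^] i \<otimes> Y [^] (-j) \<otimes> (T \<otimes> (if f then T else \<one>))"
      using Y T by (simp add: c2 m_assoc)
    also have "\<dots> = Y [^] (i + - j) \<otimes> (if f then \<one> else T)"
      using Y T TT int_pow_mult[OF Y, of i "-j"] by simp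
    finally show ?thesis using True pow_mod_int[OF Y Ym, of "i - j"] by simp
  next
    case False
    have "(Y [^] i \<otimes> \<one>) \<otimes> (Y [^] j \<otimes> (if f then T else \<one>)) = (Y [^] i \<otimes> Y [^] j) \<otimes> (if f then T else \<one>)"
      using Y T by (simp add: m_assoc)
    also have "\<dots> = Y [^] (i + j) \<otimes> (if f then T else \<one>)" using Y by (simp add: int_pow_mult)
    finally show ?thesis using False pow_mod_int[OF Y Ym, of "i + j"] by simp
  qed
qed


definition ext :: "('a,'b) monoid_scheme \<Rightarrow> ('a \<Rightarrow> 'a \<Rightarrow> real) \<Rightarrow> (real \<times> 'a) monoid" where
  "ext S u = \<lparr>carrier = {(q,g). 0 \<le> q \<and> q < 1 \<and> g \<in> carrier S},
     monoid.mult = (\<lambda>(q,g) (q',g'). (frac (q + q' + u g g'), g \<otimes>\<^bsub>S\<^esub> g')),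
     one = (frac (- u \<one>\<^bsub>S\<^esub> \<one>\<^bsub>S\<^esub>), \<one>\<^bsub>S\<^esub>)\<rparr>"

locale cext = group S for S (structure) +
  fixes u :: "'a \<Rightarrow> 'a \<Rightarrow> real"
  assumes coc: "\<lbrakk>a \<in> carrier S; b \<in> carrier S; c \<in> carrier S\<rbrakk> \<Longrightarrow> d2r S u a b c \<in> \<int>"
begin

abbreviation "E \<equiv> ext S u"

lemma E_carrier: "x \<in> carrier E \<longleftrightarrow> 0 \<le> fst x \<and> fst x < 1 \<and> snd x \<in> carrier S"
  by (cases x) (simp add: ext_def)

lemma E_mult: "(q,g) \<otimes>\<^bsub>E\<^esub> (q',g') = (frac (q + q' + u g g'), g \<otimes> g')"
  by (simp add: ext_def)

lemma E_one: "\<one>\<^bsub>E\<^esub> = (frac (- u \<one> \<one>), \<one>)"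
  by (simp add: ext_def)

lemma u1g: "g \<in> carrier S \<Longrightarrow> u \<one> g - u \<one> \<one> \<in> \<int>"
  using coc[of \<one> \<one> g] by (simp add: d2r_def)

lemma ug1: "g \<in> carrier S \<Longrightarrow> u g \<one> - u \<one> \<one> \<in> \<int>"
proof -
  assume g: "g \<in> carrier S"
  have "u \<one> \<one> - u g \<one> \<in> \<int>" using coc[of g \<one> \<one>] g by (simp add: d2r_def)
  hence "- (u \<one> \<one> - u g \<one>) \<in> \<int>" by (rule Ints_minus)
  thus ?thesis by simp
qed

lemma E_group: "group E"
proof (rule groupI)
  fix x y assume "x \<in> carrier E" "y \<in> carrier E"
  thus "x \<otimes>\<^bsub>E\<^esub> y \<in> carrier E"
    by (cases x, cases y) (simp add: E_mult E_carrier frac_lt_1)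
next
  show "\<one>\<^bsub>E\<^esub> \<in> carrier E" by (simp add: E_one E_carrier frac_lt_1)
next
  fix x y z assume xyz: "x \<in> carrier E" "y \<in> carrier E" "z \<in> carrier E"
  obtain q g where x: "x = (q,g)" by (cases x)
  obtain q' g' where y: "y = (q',g')" by (cases y)
  obtain q'' g'' where z: "z = (q'',g'')" by (cases z)
  have g: "g \<in> carrier S" "g' \<in> carrier S" "g'' \<in> carrier S" using xyz x y z by (auto simp: E_carrier)
  have "frac (frac (q + q' + u g g') + q'' + u (g \<otimes> g') g'') = frac (q + frac (q' + q'' + u g' g'') + u g (g' \<otimes> g''))"
  proof -
    have "frac (frac (q + q' + u g g') + q'' + u (g \<otimes> g') g'') = frac ((q + q' + u g g') + (q'' + u (g \<otimes> g') g''))"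
      using frac_frac_add[of "q + q' + u g g'" "q'' + u (g \<otimes> g') g''"] by (simp add: add.assoc)
    also have "\<dots> = frac ((q + u g (g' \<otimes> g'')) + (q' + q'' + u g' g''))"
    proof (rule fr_cong)
      have "(q + q' + u g g') + (q'' + u (g \<otimes> g') g'') - ((q + u g (g' \<otimes> g'')) + (q' + q'' + u g' g'')) = - d2r S u g g' g''"
        by (simp add: d2r_def)
      thus "(q + q' + u g g') + (q'' + u (g \<otimes> g') g'') - ((q + u g (g' \<otimes> g'')) + (q' + q'' + u g' g'')) \<in> \<int>"
        using coc[OF g] by simp
    qed
    also have "\<dots> = frac ((q + u g (g' \<otimes> g'')) + frac (q' + q'' + u g' g''))"
      by (rule frac_add_frac[symmetric])
    finally show ?thesis by (simp add: algebra_simps)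
  qed
  thus "x \<otimes>\<^bsub>E\<^esub> y \<otimes>\<^bsub>E\<^esub> z = x \<otimes>\<^bsub>E\<^esub> (y \<otimes>\<^bsub>E\<^esub> z)"
    using g by (simp add: x y z E_mult m_assoc)
next
  fix x assume x: "x \<in> carrier E"
  obtain q g where xq: "x = (q,g)" by (cases x)
  have g: "g \<in> carrier S" and q: "0 \<le> q" "q < 1" using x xq by (auto simp: E_carrier)
  have "frac (frac (- u \<one> \<one>) + q + u \<one> g) = frac q"
  proof -
    have "frac (frac (- u \<one> \<one>) + q + u \<one> g) = frac (- u \<one> \<one> + (q + u \<one> g))"
      using frac_frac_add[of "- u \<one> \<one>" "q + u \<one> g"] by (simp add: add.assoc)
    also have "\<dots> = frac q" by (rule fr_cong) (use u1g[OF g] in \<open>simp add: algebra_simps\<close>)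
    finally show ?thesis .
  qed
  thus "\<one>\<^bsub>E\<^esub> \<otimes>\<^bsub>E\<^esub> x = x" using g q by (simp add: xq E_one E_mult)
next
  fix x assume x: "x \<in> carrier E"
  obtain q g where xq: "x = (q,g)" by (cases x)
  have g: "g \<in> carrier S" and q: "0 \<le> q" "q < 1" using x xq by (auto simp: E_carrier)
  define y where "y = (frac (- u \<one> \<one> - q - u (inv g) g), inv g)"
  have "y \<in> carrier E" using g by (simp add: y_def E_carrier frac_lt_1)
  moreover have "y \<otimes>\<^bsub>E\<^esub> x = \<one>\<^bsub>E\<^esub>"
  proof -
    have "frac (frac (- u \<one> \<one> - q - u (inv g) g) + q + u (inv g) g) = frac (- u \<one> \<one>)"
      using frac_frac_add[of "- u \<one> \<one> - q - u (inv g) g" "q + u (inv g) g"] by (simp add: add.assoc)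
    thus ?thesis using g by (simp add: y_def xq E_mult E_one)
  qed
  ultimately show "\<exists>y\<in>carrier E. y \<otimes>\<^bsub>E\<^esub> x = \<one>\<^bsub>E\<^esub>" by blast
qed

definition iota :: "real \<Rightarrow> real \<times> 'a" where "iota \<alpha> = (frac (\<alpha> - u \<one> \<one>), \<one>)"

lemma iota_carrier [simp]: "iota \<alpha> \<in> carrier E"
  by (simp add: iota_def E_carrier frac_lt_1)

lemma iota_left: "g \<in> carrier S \<Longrightarrow> iota \<alpha> \<otimes>\<^bsub>E\<^esub> (q, g) = (frac (\<alpha> + q), g)"
proof -
  assume g: "g \<in> carrier S"
  have "frac (frac (\<alpha> - u \<one> \<one>) + q + u \<one> g) = frac (\<alpha> + q)"
  proof -
    have "frac (frac (\<alpha> - u \<one> \<one>) + q + u \<one> g) = frac ((\<alpha> - u \<one> \<one>) + (q + u \<one> g))"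
      using frac_frac_add[of "\<alpha> - u \<one> \<one>" "q + u \<one> g"] by (simp add: add.assoc)
    also have "\<dots> = frac (\<alpha> + q)" by (rule fr_cong) (use u1g[OF g] in \<open>simp add: algebra_simps\<close>)
    finally show ?thesis .
  qed
  thus ?thesis using g by (simp add: iota_def E_mult)
qed

lemma iota_right: "g \<in> carrier S \<Longrightarrow> (q, g) \<otimes>\<^bsub>E\<^esub> iota \<alpha> = (frac (\<alpha> + q), g)"
proof -
  assume g: "g \<in> carrier S"
  have "frac (q + frac (\<alpha> - u \<one> \<one>) + u g \<one>) = frac (\<alpha> + q)"
  proof -
    have "frac (q + frac (\<alpha> - u \<one> \<one>) + u g \<one>) = frac ((\<alpha> - u \<one> \<one>) + (q + u g \<one>))"
      using frac_frac_add[of "\<alpha> - u \<one> \<one>" "q + u g \<one>"] by (simp add: algebra_simps)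
    also have "\<dots> = frac (\<alpha> + q)" by (rule fr_cong) (use ug1[OF g] in \<open>simp add: algebra_simps\<close>)
    finally show ?thesis .
  qed
  thus ?thesis using g by (simp add: iota_def E_mult)
qed

lemma iota_central: "x \<in> carrier E \<Longrightarrow> iota \<alpha> \<otimes>\<^bsub>E\<^esub> x = x \<otimes>\<^bsub>E\<^esub> iota \<alpha>"
  by (cases x) (simp add: E_carrier iota_left iota_right)

lemma iota_mult: "iota \<alpha> \<otimes>\<^bsub>E\<^esub> iota \<beta> = iota (\<alpha> + \<beta>)"
proof -
  have "iota \<alpha> \<otimes>\<^bsub>E\<^esub> iota \<beta> = (frac (\<alpha> + frac (\<beta> - u \<one> \<one>)), \<one>)"
    by (simp add: iota_left iota_def[of \<beta>])
  also have "\<dots> = iota (\<alpha> + \<beta>)" by (simp add: iota_def frac_add_frac algebra_simps)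
  finally show ?thesis .
qed

lemma iota_zero: "iota 0 = \<one>\<^bsub>E\<^esub>"
  by (simp add: iota_def E_one)

lemma iota_eq: "iota \<alpha> = iota \<beta> \<longleftrightarrow> \<alpha> - \<beta> \<in> \<int>"
  by (simp add: iota_def fracEq)

lemma iota_one_iff: "iota \<alpha> = \<one>\<^bsub>E\<^esub> \<longleftrightarrow> \<alpha> \<in> \<int>"
  using iota_eq[of \<alpha> 0] by (simp add: iota_zero)

lemma iota_pow: "iota \<alpha> [^]\<^bsub>E\<^esub> (k::nat) = iota (of_nat k * \<alpha>)"
  by (induct k) (simp_all add: iota_zero iota_mult algebra_simps)

lemma iota_inv: "inv\<^bsub>E\<^esub> (iota \<alpha>) = iota (- \<alpha>)"
  using group.inv_equality[OF E_group, of "iota (- \<alpha>)" "iota \<alpha>"] by (simp add: iota_mult iota_zero)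

lemma snd_hom: "snd \<in> hom E S"
  by (rule homI) (auto simp: E_carrier E_mult)

lemma snd_one: "snd (\<one>\<^bsub>E\<^esub>) = \<one>" by (simp add: E_one)

lemma snd_iota [simp]: "snd (iota \<alpha>) = \<one>" by (simp add: iota_def)

lemma snd_mult: "snd (x \<otimes>\<^bsub>E\<^esub> y) = snd x \<otimes> snd y"
  by (cases x, cases y) (simp add: E_mult)

lemma snd_pow: "x \<in> carrier E \<Longrightarrow> snd (x [^]\<^bsub>E\<^esub> (k::nat)) = snd x [^] k"
  using hom_nat_pow[OF snd_hom _ E_group is_group] by simp

lemma snd_pow_int: "x \<in> carrier E \<Longrightarrow> snd (x [^]\<^bsub>E\<^esub> (k::int)) = snd x [^] k"
  using hom_int_pow[OF snd_hom _ E_group is_group] by simp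

lemma fiber: "x \<in> carrier E \<Longrightarrow> snd x = \<one> \<Longrightarrow> \<exists>\<alpha>. x = iota \<alpha>"
proof -
  assume x: "x \<in> carrier E" "snd x = \<one>"
  have "x = iota (fst x + u \<one> \<one>)" using x by (cases x) (simp add: iota_def E_carrier)
  thus ?thesis by blast
qed

lemma decomp: "x \<in> carrier E \<Longrightarrow> x = iota (fst x) \<otimes>\<^bsub>E\<^esub> (0, snd x)"
  by (cases x) (simp add: E_carrier iota_left)

lemma zero_carrier: "g \<in> carrier S \<Longrightarrow> (0, g) \<in> carrier E"
  by (simp add: E_carrier)

lemma section_splits:
  assumes "\<And>g. g \<in> carrier S \<Longrightarrow> \<sigma> g \<in> carrier E"
    and "\<And>g. g \<in> carrier S \<Longrightarrow> snd (\<sigma> g) = g"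
    and "\<And>a b. a \<in> carrier S \<Longrightarrow> b \<in> carrier S \<Longrightarrow> \<sigma> (a \<otimes> b) = \<sigma> a \<otimes>\<^bsub>E\<^esub> \<sigma> b"
  shows "splits S u"
  unfolding splits_def
proof (intro exI ballI)
  fix a b assume ab: "a \<in> carrier S" "b \<in> carrier S"
  obtain qa where qa: "\<sigma> a = (qa, a)" using assms(2)[OF ab(1)] by (cases "\<sigma> a") auto
  obtain qb where qb: "\<sigma> b = (qb, b)" using assms(2)[OF ab(2)] by (cases "\<sigma> b") auto
  obtain qab where qab: "\<sigma> (a \<otimes> b) = (qab, a \<otimes> b)" using assms(2)[of "a \<otimes> b"] ab by (cases "\<sigma> (a \<otimes> b)") auto
  have "qab \<in> {0..<1}" using assms(1)[of "a \<otimes> b"] ab qab by (simp add: E_carrier)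
  have "(qab, a \<otimes> b) = (frac (qa + qb + u a b), a \<otimes> b)"
    using assms(3)[OF ab] qa qb qab by (simp add: E_mult)
  hence "frac (qa + qb + u a b) = frac qab" using \<open>qab \<in> {0..<1}\<close> by simp
  hence "qa + qb + u a b - qab \<in> \<int>" by (simp add: fracEq)
  thus "u a b + fst (\<sigma> a) + fst (\<sigma> b) - fst (\<sigma> (a \<otimes> b)) \<in> \<int>"
    using qa qb qab by (simp add: algebra_simps)
qed

lemma commutator:
  assumes Xe: "Xe \<in> carrier E" and Te: "Te \<in> carrier E" and c: "snd Xe \<otimes> snd Te = snd Te \<otimes> snd Xe"
  shows "Xe \<otimes>\<^bsub>E\<^esub> Te = iota (u (snd Xe) (snd Te) - u (snd Te) (snd Xe)) \<otimes>\<^bsub>E\<^esub> (Te \<otimes>\<^bsub>E\<^esub> Xe)"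
proof -
  obtain p a where Xp: "Xe = (p, a)" by (cases Xe)
  obtain q b where Tq: "Te = (q, b)" by (cases Te)
  have a: "a \<in> carrier S" "b \<in> carrier S" "0 \<le> p" "p < 1" "0 \<le> q" "q < 1"
    using Xe Te Xp Tq by (auto simp: E_carrier)
  have ab: "a \<otimes> b = b \<otimes> a" using c Xp Tq by simp
  have "iota (u a b - u b a) \<otimes>\<^bsub>E\<^esub> (Te \<otimes>\<^bsub>E\<^esub> Xe) = (frac (u a b - u b a + frac (q + p + u b a)), b \<otimes> a)"
    using a by (simp add: Xp Tq E_mult iota_left)
  also have "\<dots> = (frac (p + q + u a b), a \<otimes> b)"
    using ab frac_add_frac[of "u a b - u b a" "q + p + u b a"] by (simp add: algebra_simps)
  finally show ?thesis by (simp add: Xp Tq E_mult)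
qed

end


context cext begin

abbreviation emul (infixl "**" 70) where "x ** y \<equiv> x \<otimes>\<^bsub>E\<^esub> y"

lemma iota_pow_int: "iota \<alpha> [^]\<^bsub>E\<^esub> (k::int) = iota (of_int k * \<alpha>)"
proof (cases "k \<ge> 0")
  case True
  define n where "n = nat k"
  have "k = int n" using True by (simp add: n_def)
  thus ?thesis by (simp add: int_pow_int iota_pow)
next
  case False
  define n where "n = nat (- k)"
  have n: "k = - int n" using False by (simp add: n_def)
  have "iota \<alpha> [^]\<^bsub>E\<^esub> k = inv\<^bsub>E\<^esub> (iota \<alpha> [^]\<^bsub>E\<^esub> n)"
    using group.int_pow_neg_int[OF E_group, of "iota \<alpha>" n] n by simp
  thus ?thesis by (simp add: iota_pow iota_inv n)
qed

lemma swap_iota: "A \<in> carrier E \<Longrightarrow> B \<in> carrier E \<Longrightarrow> (A ** iota \<alpha>) ** (B ** iota \<beta>) = (A ** B) ** iota (\<alpha> + \<beta>)"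
proof -
  assume AB: "A \<in> carrier E" "B \<in> carrier E"
  interpret Eg: group E by (rule E_group)
  have "(A ** iota \<alpha>) ** (B ** iota \<beta>) = A ** (iota \<alpha> ** B) ** iota \<beta>"
    using AB by (simp add: Eg.m_assoc)
  also have "\<dots> = A ** (B ** iota \<alpha>) ** iota \<beta>" using AB by (simp only: iota_central[OF AB(2)])
  also have "\<dots> = (A ** B) ** (iota \<alpha> ** iota \<beta>)" using AB by (simp add: Eg.m_assoc)
  finally show ?thesis by (simp add: iota_mult)
qed

lemma iota_cancel: "0 < m \<Longrightarrow> iota z ** iota (- z / real m) [^]\<^bsub>E\<^esub> (m::nat) = \<one>\<^bsub>E\<^esub>"
proof -
  assume m: "0 < m"
  have eq: "z + real m * (- z / real m) = 0" using m by simp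
  have "iota z ** iota (- z / real m) [^]\<^bsub>E\<^esub> m = iota (z + real m * (- z / real m))"
    by (simp only: iota_pow iota_mult)
  also have "\<dots> = \<one>\<^bsub>E\<^esub>" by (simp only: eq iota_zero)
  finally show ?thesis .
qed

lemma cyclic_splits:
  assumes \<rho>: "\<rho> \<in> carrier S" and m: "0 < m" "\<rho> [^] (m::nat) = \<one>"
    and cov: "\<And>g. g \<in> carrier S \<Longrightarrow> \<exists>i<m. g = \<rho> [^] i"
    and inj: "\<And>i j. i < m \<Longrightarrow> j < m \<Longrightarrow> \<rho> [^] i = \<rho> [^] j \<Longrightarrow> i = j"
  shows "splits S u"
proof -
  interpret Eg: group E by (rule E_group)
  define Y0 where "Y0 = (0::real, \<rho>)"
  have Y0: "Y0 \<in> carrier E" using \<rho> by (simp add: Y0_def zero_carrier)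
  have "snd (Y0 [^]\<^bsub>E\<^esub> m) = \<one>" unfolding snd_pow[OF Y0] using m by (simp add: Y0_def)
  from fiber[OF Eg.nat_pow_closed[OF Y0] this] obtain z where z: "Y0 [^]\<^bsub>E\<^esub> m = iota z" by blast
  define Y where "Y = Y0 ** iota (- z / m)"
  have Yc: "Y \<in> carrier E" unfolding Y_def by (rule Eg.m_closed[OF Y0 iota_carrier])
  have sY: "snd Y = \<rho>" unfolding Y_def snd_mult snd_iota using \<rho> by (simp add: Y0_def)
  have "Y [^]\<^bsub>E\<^esub> m = Y0 [^]\<^bsub>E\<^esub> m ** iota (- z / m) [^]\<^bsub>E\<^esub> m"
    unfolding Y_def by (rule Eg.pow_mult_distrib[OF iota_central[OF Y0, symmetric] Y0 iota_carrier])
  also have "\<dots> = \<one>\<^bsub>E\<^esub>" unfolding z by (rule iota_cancel[OF m(1)])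
  finally have Ym: "Y [^]\<^bsub>E\<^esub> m = \<one>\<^bsub>E\<^esub>" .
  define idx where "idx g = (SOME i. i < m \<and> g = \<rho> [^] i)" for g
  have idx: "idx g < m \<and> g = \<rho> [^] idx g" if "g \<in> carrier S" for g
    unfolding idx_def using cov[OF that] by (rule someI_ex[where P="\<lambda>i. i < m \<and> g = \<rho> [^] i"]) 
  have idx_pow: "idx (\<rho> [^] i) = i" if "i < m" for i
    using idx[of "\<rho> [^] i"] \<rho> inj that by auto
  define \<sigma> where "\<sigma> g = Y [^]\<^bsub>E\<^esub> idx g" for g
  show ?thesis
  proof (rule section_splits)
    fix g assume "g \<in> carrier S"
    show "\<sigma> g \<in> carrier E" using Yc by (simp add: \<sigma>_def)
    show "snd (\<sigma> g) = g" using snd_pow[OF Yc] sY idx[OF \<open>g \<in> carrier S\<close>] by (simp add: \<sigma>_def)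
  next
    fix a b assume ab: "a \<in> carrier S" "b \<in> carrier S"
    define i where "i = idx a"
    define j where "j = idx b"
    have a: "a = \<rho> [^] i" "i < m" using idx[OF ab(1)] by (simp_all add: i_def)
    have b: "b = \<rho> [^] j" "j < m" using idx[OF ab(2)] by (simp_all add: j_def)
    have "a \<otimes> b = \<rho> [^] ((i + j) mod m)"
      using a b \<rho> by (simp add: nat_pow_mult pow_mod_nat[OF \<rho> m(2), of "i+j"])
    hence "idx (a \<otimes> b) = (i + j) mod m" using idx_pow m(1) by simp
    hence "\<sigma> (a \<otimes> b) = Y [^]\<^bsub>E\<^esub> ((i + j) mod m)" by (simp add: \<sigma>_def)
    also have "\<dots> = Y [^]\<^bsub>E\<^esub> (i + j)" using Eg.pow_mod_nat[OF Yc Ym, of "i+j"] by simp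
    also have "\<dots> = \<sigma> a ** \<sigma> b" using Yc by (simp add: \<sigma>_def i_def j_def Eg.nat_pow_mult)
    finally show "\<sigma> (a \<otimes> b) = \<sigma> a ** \<sigma> b" .
  qed
qed

lemma fiber_obtain:
  assumes "x \<in> carrier E" "snd x = \<one>" obtains \<alpha> where "x = iota \<alpha>"
  using fiber[OF assms] by blast

lemma dih_lifts:
  assumes \<rho>: "\<rho> \<in> carrier S" and \<tau>: "\<tau> \<in> carrier S" and m: "0 < m" "\<rho> [^] (m::nat) = \<one>"
    and tt: "\<tau> \<otimes> \<tau> = \<one>" and tr: "\<tau> \<otimes> \<rho> \<otimes> \<tau> \<otimes> \<rho> = \<one>"
  shows "\<exists>Y0 T z c1. Y0 \<in> carrier E \<and> T \<in> carrier E \<and> snd Y0 = \<rho> \<and> snd T = \<tau> \<and> T ** T = \<one>\<^bsub>E\<^esub>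
     \<and> Y0 [^]\<^bsub>E\<^esub> m = iota z \<and> T ** Y0 ** T ** Y0 = iota c1 \<and> 2 * z - real m * c1 \<in> \<int>
     \<and> (even m \<longrightarrow> u (\<rho> [^] (m div 2)) \<tau> - u \<tau> (\<rho> [^] (m div 2)) + z - real (m div 2) * c1 \<in> \<int>)"
proof -
  interpret Eg: group E by (rule E_group)
  define Y0 where "Y0 = (0::real, \<rho>)"
  define T0 where "T0 = (0::real, \<tau>)"
  have Y0: "Y0 \<in> carrier E" using \<rho> by (simp add: Y0_def zero_carrier)
  have T0: "T0 \<in> carrier E" using \<tau> by (simp add: T0_def zero_carrier)
  have "snd (T0 ** T0) = \<one>" unfolding snd_mult using tt by (simp add: T0_def)
  then obtain w where w: "T0 ** T0 = iota w" using fiber_obtain[OF Eg.m_closed[OF T0 T0]] by blast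
  define T where "T = T0 ** iota (- w / 2)"
  have T: "T \<in> carrier E" unfolding T_def by (rule Eg.m_closed[OF T0 iota_carrier])
  have sT: "snd T = \<tau>" unfolding T_def snd_mult snd_iota using \<tau> by (simp add: T0_def)
  have TT: "T ** T = \<one>\<^bsub>E\<^esub>"
  proof -
    have "T ** T = (T0 ** T0) ** iota (- w / 2 + - w / 2)" unfolding T_def by (rule swap_iota[OF T0 T0])
    also have "\<dots> = iota (w + (- w / 2 + - w / 2))" by (simp only: w iota_mult)
    also have "w + (- w / 2 + - w / 2) = 0" by simp
    finally show ?thesis by (simp only: iota_zero)
  qed
  have "snd (Y0 [^]\<^bsub>E\<^esub> m) = \<one>" unfolding snd_pow[OF Y0] using m by (simp add: Y0_def)
  then obtain z where z: "Y0 [^]\<^bsub>E\<^esub> m = iota z" using fiber_obtain[OF Eg.nat_pow_closed[OF Y0]] by blast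
  have "snd (T ** Y0 ** T ** Y0) = \<one>" unfolding snd_mult sT using tr by (simp add: Y0_def)
  then obtain c1 where c1: "T ** Y0 ** T ** Y0 = iota c1"
    using fiber_obtain[of "T ** Y0 ** T ** Y0"] T Y0 by blast
  define C where "C = T ** Y0 ** T"
  have Cc: "C \<in> carrier E" using T Y0 by (simp add: C_def)
  have C: "C = iota c1 ** inv\<^bsub>E\<^esub> Y0"
  proof -
    have "C = (C ** Y0) ** inv\<^bsub>E\<^esub> Y0" using Cc Y0 by (simp add: Eg.m_assoc)
    thus ?thesis using c1 by (simp add: C_def)
  qed
  have conj: "T ** Y0 [^]\<^bsub>E\<^esub> k ** T = iota (of_int k * c1) ** inv\<^bsub>E\<^esub> (Y0 [^]\<^bsub>E\<^esub> k)" for k :: int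
  proof -
    have "T ** Y0 [^]\<^bsub>E\<^esub> k ** T = C [^]\<^bsub>E\<^esub> k" unfolding C_def by (rule Eg.conj_pow[OF T TT Y0])
    also have "\<dots> = iota c1 [^]\<^bsub>E\<^esub> k ** (inv\<^bsub>E\<^esub> Y0) [^]\<^bsub>E\<^esub> k"
      unfolding C by (rule Eg.int_pow_mult_distrib) (simp_all add: Y0 iota_central)
    also have "\<dots> = iota (of_int k * c1) ** inv\<^bsub>E\<^esub> (Y0 [^]\<^bsub>E\<^esub> k)"
      by (simp add: iota_pow_int Eg.int_pow_inv Y0)
    finally show ?thesis .
  qed
  have Tcent: "T ** iota \<gamma> ** T = iota \<gamma>" for \<gamma>
  proof -
    have "T ** iota \<gamma> ** T = iota \<gamma> ** (T ** T)"
      using T by (simp only: iota_central[OF T, symmetric] Eg.m_assoc iota_carrier)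
    thus ?thesis using TT by simp
  qed
  have rel: "2 * z - real m * c1 \<in> \<int>"
  proof -
    have "iota z = T ** Y0 [^]\<^bsub>E\<^esub> (int m) ** T" by (simp add: int_pow_int z Tcent)
    also have "\<dots> = iota (real m * c1) ** inv\<^bsub>E\<^esub> (iota z)" using conj[of "int m"] by (simp add: int_pow_int z)
    also have "\<dots> = iota (real m * c1 - z)" by (simp add: iota_inv iota_mult)
    finally have "z - (real m * c1 - z) \<in> \<int>" by (simp add: iota_eq)
    thus ?thesis by (simp add: algebra_simps)
  qed
  have ev: "u (\<rho> [^] (m div 2)) \<tau> - u \<tau> (\<rho> [^] (m div 2)) + z - real (m div 2) * c1 \<in> \<int>" if "even m"
  proof -
    define k where "k = m div 2"
    have mk: "m = k + k" using that unfolding k_def by (elim evenE) simp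
    define x where "x = \<rho> [^] k"
    have x: "x \<in> carrier S" using \<rho> by (simp add: x_def)
    have xx: "x \<otimes> x = \<one>" using m(2) \<rho> by (simp add: x_def nat_pow_mult mk)
    have invx: "inv x = x" using xx x by (intro inv_equality) auto
    have inv\<rho>: "inv \<rho> = \<tau> \<otimes> \<rho> \<otimes> \<tau>" using tr \<rho> \<tau> by (intro inv_equality) auto
    have "\<tau> \<otimes> \<rho> [^] (int k) \<otimes> \<tau> = (inv \<rho>) [^] (int k)" using conj_pow[OF \<tau> tt \<rho>] inv\<rho> by simp
    hence txtx: "\<tau> \<otimes> x \<otimes> \<tau> = x" using \<rho> invx by (simp add: int_pow_inv int_pow_int x_def nat_pow_inv)
    have xt: "x \<otimes> \<tau> = \<tau> \<otimes> x"
    proof -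
      have "\<tau> \<otimes> x = \<tau> \<otimes> x \<otimes> (\<tau> \<otimes> \<tau>)" using tt x \<tau> by simp
      also have "\<dots> = (\<tau> \<otimes> x \<otimes> \<tau>) \<otimes> \<tau>" using x \<tau> by (simp add: m_assoc)
      finally show ?thesis using txtx by simp
    qed
    define Xe where "Xe = Y0 [^]\<^bsub>E\<^esub> k"
    have Xc: "Xe \<in> carrier E" using Y0 by (simp add: Xe_def)
    have sX: "snd Xe = x" unfolding Xe_def snd_pow[OF Y0] by (simp add: Y0_def x_def)
    define \<beta> where "\<beta> = u x \<tau> - u \<tau> x"
    have com: "Xe ** T = iota \<beta> ** (T ** Xe)" using commutator[OF Xc T] sX sT xt by (simp add: \<beta>_def)
    have "T ** Xe ** T = iota \<beta> ** Xe"
    proof -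
      have "T ** Xe ** T = T ** (iota \<beta> ** (T ** Xe))" using com Xc T by (simp add: Eg.m_assoc)
      also have "\<dots> = (T ** iota \<beta> ** T) ** Xe" using Xc T by (simp add: Eg.m_assoc)
      finally show ?thesis by (simp add: Tcent)
    qed
    moreover have "T ** Xe ** T = iota (real k * c1) ** inv\<^bsub>E\<^esub> Xe"
      using conj[of "int k"] by (simp add: Xe_def int_pow_int)
    ultimately have "iota \<beta> ** Xe = iota (real k * c1) ** inv\<^bsub>E\<^esub> Xe" by simp
    hence "iota \<beta> ** Xe ** Xe = iota (real k * c1)" using Xc by (simp add: Eg.m_assoc)
    moreover have "Xe ** Xe = iota z" using Y0 by (simp add: Xe_def Eg.nat_pow_mult mk[symmetric] z)
    ultimately have "iota (\<beta> + z) = iota (real k * c1)" using Xc by (simp add: Eg.m_assoc iota_mult)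
    hence "\<beta> + z - real k * c1 \<in> \<int>" by (simp add: iota_eq)
    thus ?thesis by (simp add: \<beta>_def x_def k_def)
  qed
  show ?thesis using Y0 T sT TT z c1 rel ev by (intro exI[of _ Y0] exI[of _ T] exI[of _ z] exI[of _ c1]) (simp add: Y0_def)
qed

lemma iota_move: "P \<in> carrier E \<Longrightarrow> Q \<in> carrier E \<Longrightarrow> (P ** iota \<alpha>) ** Q = (P ** Q) ** iota \<alpha>"
proof -
  assume PQ: "P \<in> carrier E" "Q \<in> carrier E"
  interpret Eg: group E by (rule E_group)
  have "(P ** iota \<alpha>) ** Q = P ** (iota \<alpha> ** Q)" using PQ by (simp add: Eg.m_assoc)
  also have "\<dots> = P ** (Q ** iota \<alpha>)" by (simp only: iota_central[OF PQ(2)])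
  also have "\<dots> = (P ** Q) ** iota \<alpha>" using PQ by (simp add: Eg.m_assoc)
  finally show ?thesis .
qed

lemma beta_half:
  assumes \<rho>: "\<rho> \<in> carrier S" and \<tau>: "\<tau> \<in> carrier S" and m: "0 < m" "\<rho> [^] (m::nat) = \<one>"
    and tt: "\<tau> \<otimes> \<tau> = \<one>" and tr: "\<tau> \<otimes> \<rho> \<otimes> \<tau> \<otimes> \<rho> = \<one>" and ev: "even m"
  shows "2 * (u (\<rho> [^] (m div 2)) \<tau> - u \<tau> (\<rho> [^] (m div 2))) \<in> \<int>"
proof -
  obtain Y0 T z c1 where rel: "2 * z - real m * c1 \<in> \<int>"
    and e: "u (\<rho> [^] (m div 2)) \<tau> - u \<tau> (\<rho> [^] (m div 2)) + z - real (m div 2) * c1 \<in> \<int>"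
    using dih_lifts[OF assms(1-6)] ev by blast
  have mk: "real m = 2 * real (m div 2)" using ev by (elim evenE) simp
  have "2 * (u (\<rho> [^] (m div 2)) \<tau> - u \<tau> (\<rho> [^] (m div 2)) + z - real (m div 2) * c1) - (2 * z - real m * c1) \<in> \<int>"
  proof -
    have A: "(2::real) * (u (\<rho> [^] (m div 2)) \<tau> - u \<tau> (\<rho> [^] (m div 2)) + z - real (m div 2) * c1) \<in> \<int>"
      by (rule Ints_mult[OF _ e]) simp
    show ?thesis by (rule Ints_diff[OF A rel])
  qed
  thus ?thesis by (simp add: mk algebra_simps)
qed

lemma dihedral_splits:
  assumes \<rho>: "\<rho> \<in> carrier S" and \<tau>: "\<tau> \<in> carrier S" and m: "0 < m" "\<rho> [^] (m::nat) = \<one>"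
    and tt: "\<tau> \<otimes> \<tau> = \<one>" and tr: "\<tau> \<otimes> \<rho> \<otimes> \<tau> \<otimes> \<rho> = \<one>"
    and cov: "\<And>g. g \<in> carrier S \<Longrightarrow> \<exists>i e. i < m \<and> g = \<rho> [^] i \<otimes> (if e then \<tau> else \<one>)"
    and inj: "\<And>i j e f. i < m \<Longrightarrow> j < m \<Longrightarrow> \<rho> [^] i \<otimes> (if e then \<tau> else \<one>) = \<rho> [^] j \<otimes> (if f then \<tau> else \<one>) \<Longrightarrow> i = j \<and> e = f"
    and cond: "odd m \<or> u (\<rho> [^] (m div 2)) \<tau> - u \<tau> (\<rho> [^] (m div 2)) \<in> \<int>"
  shows "splits S u"
proof -
  interpret Eg: group E by (rule E_group)
  obtain Y0 T z c1 where Y0: "Y0 \<in> carrier E" and T: "T \<in> carrier E" and sY0: "snd Y0 = \<rho>" and sT: "snd T = \<tau>"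
    and TT: "T ** T = \<one>\<^bsub>E\<^esub>" and z: "Y0 [^]\<^bsub>E\<^esub> m = iota z" and c1: "T ** Y0 ** T ** Y0 = iota c1"
    and rel: "2 * z - real m * c1 \<in> \<int>"
    and ev: "even m \<longrightarrow> u (\<rho> [^] (m div 2)) \<tau> - u \<tau> (\<rho> [^] (m div 2)) + z - real (m div 2) * c1 \<in> \<int>"
    using dih_lifts[OF assms(1-6)] by blast
  obtain N where N: "2 * z - real m * c1 = of_int N" using rel by (auto elim: Ints_cases)
  obtain \<alpha> where a1: "z + real m * \<alpha> \<in> \<int>" and a2: "c1 + 2 * \<alpha> \<in> \<int>"
  proof (cases "even N")
    case True
    then obtain t where t: "N = 2 * t" by (elim evenE)
    have "z + real m * (- c1 / 2) = of_int t" using N t by (simp add: field_simps)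
    moreover have "c1 + 2 * (- c1 / 2) = 0" by simp
    ultimately show ?thesis using that[of "- c1 / 2"] by simp
  next
    case False
    have "odd m"
    proof
      assume em: "even m"
      then obtain k where k: "m = 2 * k" by (elim evenE)
      have c0: "u (\<rho> [^] k) \<tau> - u \<tau> (\<rho> [^] k) \<in> \<int>" using cond em k by simp
      have e0: "u (\<rho> [^] k) \<tau> - u \<tau> (\<rho> [^] k) + z - real k * c1 \<in> \<int>" using ev em k by simp
      have "(u (\<rho> [^] k) \<tau> - u \<tau> (\<rho> [^] k) + z - real k * c1) - (u (\<rho> [^] k) \<tau> - u \<tau> (\<rho> [^] k)) \<in> \<int>"
        by (rule Ints_diff[OF e0 c0])
      then obtain t where "z - real k * c1 = of_int t" by (auto elim: Ints_cases)
      hence "of_int N = (of_int (2 * t) :: real)" using N k by (simp add: algebra_simps)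
      hence "N = 2 * t" by (simp only: of_int_eq_iff)
      thus False using False by simp
    qed
    then obtain t where t: "N + int m = 2 * t"
      using False by (metis even_add even_of_nat evenE)
    have "z + real m * (- c1 / 2 + 1 / 2) = of_int t"
    proof -
      have "of_int N + real m = 2 * of_int t" using t by (metis of_int_add of_int_mult of_int_of_nat_eq of_int_numeral)
      thus ?thesis using N by (simp add: field_simps)
    qed
    moreover have "c1 + 2 * (- c1 / 2 + 1 / 2) = 1" by simp
    ultimately show ?thesis using that[of "- c1 / 2 + 1 / 2"] by simp
  qed
  define Y where "Y = Y0 ** iota \<alpha>"
  have Y: "Y \<in> carrier E" unfolding Y_def by (rule Eg.m_closed[OF Y0 iota_carrier])
  have sY: "snd Y = \<rho>" unfolding Y_def snd_mult snd_iota using \<rho> sY0 by simp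
  have Ym: "Y [^]\<^bsub>E\<^esub> m = \<one>\<^bsub>E\<^esub>"
  proof -
    have "Y [^]\<^bsub>E\<^esub> m = Y0 [^]\<^bsub>E\<^esub> m ** iota \<alpha> [^]\<^bsub>E\<^esub> m"
      unfolding Y_def by (rule Eg.pow_mult_distrib[OF iota_central[OF Y0, symmetric] Y0 iota_carrier])
    also have "\<dots> = iota (z + real m * \<alpha>)" by (simp only: z iota_pow iota_mult)
    finally show ?thesis using a1 by (simp add: iota_one_iff)
  qed
  have TY: "T ** Y ** T ** Y = \<one>\<^bsub>E\<^esub>"
  proof -
    have "T ** Y = (T ** Y0) ** iota \<alpha>" unfolding Y_def using T Y0 by (simp add: Eg.m_assoc)
    hence "T ** Y ** T = (T ** Y0 ** T) ** iota \<alpha>" using T Y0 by (simp add: iota_move)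
    hence "T ** Y ** T ** Y = (T ** Y0 ** T ** Y0) ** iota (\<alpha> + \<alpha>)"
      unfolding Y_def using T Y0 by (simp add: swap_iota)
    also have "\<dots> = iota (c1 + 2 * \<alpha>)" by (simp add: c1 iota_mult)
    finally show ?thesis using a2 by (simp add: iota_one_iff)
  qed
  define Tp where "Tp e = (if e then T else \<one>\<^bsub>E\<^esub>)" for e
  define tp where "tp e = (if e then \<tau> else \<one>)" for e
  have Tp: "Tp e \<in> carrier E" for e using T by (simp add: Tp_def)
  have sTp: "snd (Tp e) = tp e" for e using sT by (simp add: Tp_def tp_def snd_one)
  define idx where "idx g = (SOME p. fst p < m \<and> g = \<rho> [^] fst p \<otimes> tp (snd p))" for g
  have idx: "fst (idx g) < m \<and> g = \<rho> [^] fst (idx g) \<otimes> tp (snd (idx g))" if gS: "g \<in> carrier S" for g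
  proof -
    obtain i e where "i < m \<and> g = \<rho> [^] i \<otimes> tp e" using cov[OF gS] by (auto simp: tp_def)
    hence "\<exists>p. fst p < m \<and> g = \<rho> [^] fst p \<otimes> tp (snd p)" by (intro exI[of _ "(i,e)"]) simp
    thus ?thesis unfolding idx_def by (rule someI_ex)
  qed
  have injtp: "i = j \<and> e = f" if "i < m" "j < m" "\<rho> [^] i \<otimes> tp e = \<rho> [^] j \<otimes> tp f" for i j e f
    using inj[OF that(1,2)] that(3) by (simp add: tp_def)
  have idx_eq: "idx (\<rho> [^] i \<otimes> tp e) = (i, e)" if "i < m" for i e
  proof -
    have g: "\<rho> [^] i \<otimes> tp e \<in> carrier S" using \<rho> \<tau> by (simp add: tp_def)
    from idx[OF g] have "\<rho> [^] fst (idx (\<rho> [^] i \<otimes> tp e)) \<otimes> tp (snd (idx (\<rho> [^] i \<otimes> tp e))) = \<rho> [^] i \<otimes> tp e"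
      "fst (idx (\<rho> [^] i \<otimes> tp e)) < m" by auto
    from injtp[OF this(2) that this(1)] show ?thesis by (simp add: prod_eq_iff)
  qed
  define \<sigma> where "\<sigma> g = Y [^]\<^bsub>E\<^esub> fst (idx g) ** Tp (snd (idx g))" for g
  have mult: "(\<rho> [^] i \<otimes> tp e) \<otimes> (\<rho> [^] j \<otimes> tp f) = \<rho> [^] (nat ((int i + (if e then - int j else int j)) mod int m)) \<otimes> tp (e \<noteq> f)"
    and multE: "(Y [^]\<^bsub>E\<^esub> i ** Tp e) ** (Y [^]\<^bsub>E\<^esub> j ** Tp f) = Y [^]\<^bsub>E\<^esub> (nat ((int i + (if e then - int j else int j)) mod int m)) ** Tp (e \<noteq> f)"
    for i j :: nat and e f
  proof -
    have nn: "0 \<le> (int i + (if e then - int j else int j)) mod int m" using m(1) by simp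
    show "(\<rho> [^] i \<otimes> tp e) \<otimes> (\<rho> [^] j \<otimes> tp f) = \<rho> [^] (nat ((int i + (if e then - int j else int j)) mod int m)) \<otimes> tp (e \<noteq> f)"
      using dih_mult[OF \<rho> \<tau> m(2) tt tr, of "int i" e "int j" f] nn
      by (simp add: int_pow_int[symmetric] tp_def del: int_pow_int)
    show "(Y [^]\<^bsub>E\<^esub> i ** Tp e) ** (Y [^]\<^bsub>E\<^esub> j ** Tp f) = Y [^]\<^bsub>E\<^esub> (nat ((int i + (if e then - int j else int j)) mod int m)) ** Tp (e \<noteq> f)"
      using Eg.dih_mult[OF Y T Ym TT TY, of "int i" e "int j" f] nn
      by (simp add: int_pow_int[symmetric] Tp_def del: int_pow_int)
  qed
  show ?thesis
  proof (rule section_splits)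
    fix g assume g: "g \<in> carrier S"
    show "\<sigma> g \<in> carrier E" using Y Tp by (simp add: \<sigma>_def)
    show "snd (\<sigma> g) = g" using idx[OF g] unfolding \<sigma>_def snd_mult snd_pow[OF Y] sY sTp by simp
  next
    fix a b assume ab: "a \<in> carrier S" "b \<in> carrier S"
    obtain i e where ie: "idx a = (i, e)" by (cases "idx a")
    obtain j f where jf: "idx b = (j, f)" by (cases "idx b")
    have a: "a = \<rho> [^] i \<otimes> tp e" "i < m" using idx[OF ab(1)] ie by auto
    have b: "b = \<rho> [^] j \<otimes> tp f" "j < m" using idx[OF ab(2)] jf by auto
    have lt: "nat ((int i + (if e then - int j else int j)) mod int m) < m" using m(1)
      by (simp add: nat_less_iff)
    have "idx (a \<otimes> b) = (nat ((int i + (if e then - int j else int j)) mod int m), e \<noteq> f)"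
      unfolding a b mult by (rule idx_eq[OF lt])
    thus "\<sigma> (a \<otimes> b) = \<sigma> a ** \<sigma> b" unfolding \<sigma>_def using ie jf multE by simp
  qed
qed

end


lemma splits_comm:
  assumes "splits S u" "a \<in> carrier S" "b \<in> carrier S" "a \<otimes>\<^bsub>S\<^esub> b = b \<otimes>\<^bsub>S\<^esub> a"
  shows "u a b - u b a \<in> \<int>"
proof -
  obtain \<kappa> where k: "\<forall>a\<in>carrier S. \<forall>b\<in>carrier S. u a b + \<kappa> a + \<kappa> b - \<kappa> (a \<otimes>\<^bsub>S\<^esub> b) \<in> \<int>"
    using assms(1) unfolding splits_def by blast
  have 1: "u a b + \<kappa> a + \<kappa> b - \<kappa> (a \<otimes>\<^bsub>S\<^esub> b) \<in> \<int>" using k assms by blast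
  have 2: "u b a + \<kappa> b + \<kappa> a - \<kappa> (a \<otimes>\<^bsub>S\<^esub> b) \<in> \<int>" using k assms by fastforce
  have "(u a b + \<kappa> a + \<kappa> b - \<kappa> (a \<otimes>\<^bsub>S\<^esub> b)) - (u b a + \<kappa> b + \<kappa> a - \<kappa> (a \<otimes>\<^bsub>S\<^esub> b)) \<in> \<int>"
    by (rule Ints_diff[OF 1 2])
  thus ?thesis by (simp add: algebra_simps)
qed

lemma lemmaA2:
  assumes grp: "group S" and fin: "finite (carrier S)"
    and prim: "\<forall>a\<in>carrier S. \<forall>b\<in>carrier S. \<forall>c\<in>carrier S. d2r S u a b c = f [a,b,c]"
    and cob: "coboundary S 3 f"
  shows "splits S u"
proof -
  interpret group S by (rule grp)
  obtain k where k: "\<forall>xs\<in>tuples S 3. f xs = cobound S 2 k xs" using cob unfolding coboundary3 by blast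
  define N where "N = real (card (carrier S))"
  have Npos: "N > 0" unfolding N_def using fin one_closed card_gt_0_iff by fastforce
  define z where "z a b = u a b - real_of_int (k [a,b])" for a b
  have dz: "z b c - z (a \<otimes>\<^bsub>S\<^esub> b) c + z a (b \<otimes>\<^bsub>S\<^esub> c) - z a b = 0"
    if abc: "a \<in> carrier S" "b \<in> carrier S" "c \<in> carrier S" for a b c
  proof -
    have "f [a,b,c] = cobound S 2 k [a,b,c]" using k abc by (simp add: tuples3)
    hence "d2r S u a b c = k [b,c] - k [a \<otimes>\<^bsub>S\<^esub> b, c] + k [a, b \<otimes>\<^bsub>S\<^esub> c] - k [a,b]"
      using prim abc by (simp add: cobound2_eq)
    thus ?thesis unfolding z_def d2r_def by simp
  qed
  define Z where "Z a = (\<Sum>g\<in>carrier S. z a g)" for a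
  have key: "Z b - Z (a \<otimes>\<^bsub>S\<^esub> b) + Z a - N * z a b = 0" if ab: "a \<in> carrier S" "b \<in> carrier S" for a b
  proof -
    have s: "(\<Sum>g\<in>carrier S. z a (b \<otimes>\<^bsub>S\<^esub> g)) = Z a" unfolding Z_def by (rule sum_lmult[OF ab(2)])
    have "(\<Sum>g\<in>carrier S. z b g - z (a \<otimes>\<^bsub>S\<^esub> b) g + z a (b \<otimes>\<^bsub>S\<^esub> g) - z a b) = 0"
      using dz ab by simp
    hence "(\<Sum>g\<in>carrier S. z b g) - (\<Sum>g\<in>carrier S. z (a \<otimes>\<^bsub>S\<^esub> b) g) + (\<Sum>g\<in>carrier S. z a (b \<otimes>\<^bsub>S\<^esub> g))
        - (\<Sum>g\<in>carrier S. z a b) = 0"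
      by (simp only: sum.distrib sum_subtractf)
    thus ?thesis using s unfolding Z_def N_def by simp
  qed
  show ?thesis unfolding splits_def
  proof (intro exI ballI)
    fix a b assume ab: "a \<in> carrier S" "b \<in> carrier S"
    have "u a b + - Z a / N + - Z b / N - - Z (a \<otimes>\<^bsub>S\<^esub> b) / N = u a b - (Z b - Z (a \<otimes>\<^bsub>S\<^esub> b) + Z a) / N"
      using Npos by (simp add: field_simps)
    also have "\<dots> = u a b - z a b" using key[OF ab] Npos by (simp add: field_simps)
    also have "\<dots> = real_of_int (k [a,b])" by (simp add: z_def)
    finally show "u a b + - Z a / N + - Z b / N - - Z (a \<otimes>\<^bsub>S\<^esub> b) / N \<in> \<int>" by simp
  qed
qed


lemma D_carrier: "x \<in> carrier (dihedral n) \<longleftrightarrow> 0 \<le> fst x \<and> fst x < int n"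
  by (cases x) (simp add: dihedral_def)

lemma D_mult: "(k1, b1) \<otimes>\<^bsub>dihedral n\<^esub> (k2, b2) = ((k1 + (if b1 then - k2 else k2)) mod int n, b1 \<noteq> b2)"
  by (simp add: dihedral_def)

lemma D_one: "\<one>\<^bsub>dihedral n\<^esub> = (0, False)"
  by (simp add: dihedral_def)

lemma D_group: assumes "n \<ge> 1" shows "group (dihedral n)"
proof (rule groupI)
  fix x y assume "x \<in> carrier (dihedral n)" "y \<in> carrier (dihedral n)"
  thus "x \<otimes>\<^bsub>dihedral n\<^esub> y \<in> carrier (dihedral n)" using assms
    by (cases x, cases y) (simp add: D_mult D_carrier)
next
  show "\<one>\<^bsub>dihedral n\<^esub> \<in> carrier (dihedral n)" using assms by (simp add: D_one D_carrier)
next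
  fix x y z assume "x \<in> carrier (dihedral n)" "y \<in> carrier (dihedral n)" "z \<in> carrier (dihedral n)"
  obtain k1 b1 where x: "x = (k1, b1)" by (cases x)
  obtain k2 b2 where y: "y = (k2, b2)" by (cases y)
  obtain k3 b3 where z: "z = (k3, b3)" by (cases z)
  show "x \<otimes>\<^bsub>dihedral n\<^esub> y \<otimes>\<^bsub>dihedral n\<^esub> z = x \<otimes>\<^bsub>dihedral n\<^esub> (y \<otimes>\<^bsub>dihedral n\<^esub> z)"
    unfolding x y z D_mult
    by (cases b1; cases b2; simp add: mod_simps algebra_simps)
next
  fix x assume "x \<in> carrier (dihedral n)"
  thus "\<one>\<^bsub>dihedral n\<^esub> \<otimes>\<^bsub>dihedral n\<^esub> x = x"
    by (cases x) (simp add: D_one D_mult D_carrier)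
next
  fix x assume x: "x \<in> carrier (dihedral n)"
  obtain k b where kb: "x = (k, b)" by (cases x)
  define y where "y = (if b then (k, True) else ((- k) mod int n, False))"
  have "y \<in> carrier (dihedral n)" using x assms by (simp add: y_def kb D_carrier)
  moreover have "y \<otimes>\<^bsub>dihedral n\<^esub> x = \<one>\<^bsub>dihedral n\<^esub>"
    by (cases b) (simp_all add: y_def kb D_mult D_one mod_simps)
  ultimately show "\<exists>y\<in>carrier (dihedral n). y \<otimes>\<^bsub>dihedral n\<^esub> x = \<one>\<^bsub>dihedral n\<^esub>" by blast
qed

lemma D_rot_pow: "(d, False) [^]\<^bsub>dihedral n\<^esub> (j::nat) = ((int j * d) mod int n, False)"
proof (induct j)
  case 0 show ?case by (simp add: D_one)
next
  case (Suc j) thus ?case by (simp add: D_mult mod_simps algebra_simps)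
qed


lemma pow_upd: "x [^]\<^bsub>G\<lparr>carrier := H\<rparr>\<^esub> (j::nat) = x [^]\<^bsub>G\<^esub> j"
  by (induct j) simp_all

lemma D_rot_inv: "n \<ge> 1 \<Longrightarrow> 0 \<le> a \<Longrightarrow> a < int n \<Longrightarrow> inv\<^bsub>dihedral n\<^esub> (a, False) = ((- a) mod int n, False)"
  by (rule group.inv_equality[OF D_group]) (simp_all add: D_mult D_one D_carrier mod_simps)

locale Dsub =
  fixes n :: nat and H :: "(int \<times> bool) set"
  assumes n1: "n \<ge> 1" and sub: "subgroup H (dihedral n)"
begin

abbreviation "G \<equiv> dihedral n"

lemma Gg: "group G" by (rule D_group[OF n1])

lemma HG: "x \<in> H \<Longrightarrow> x \<in> carrier G" using subgroup.subset[OF sub] by blast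

lemma Hmult: "x \<in> H \<Longrightarrow> y \<in> H \<Longrightarrow> x \<otimes>\<^bsub>G\<^esub> y \<in> H" by (rule subgroup.m_closed[OF sub])

lemma Hinv: "x \<in> H \<Longrightarrow> inv\<^bsub>G\<^esub> x \<in> H" by (rule subgroup.m_inv_closed[OF sub])

lemma Hone: "(0, False) \<in> H" using subgroup.one_closed[OF sub] by (simp add: D_one)

lemma Hpow: "x \<in> H \<Longrightarrow> x [^]\<^bsub>G\<^esub> (j::nat) \<in> H"
  by (induct j) (simp_all add: Hone D_one Hmult)

definition dn :: nat where "dn = (LEAST k. 0 < k \<and> k \<le> n \<and> (int k mod int n, False) \<in> H)"

lemma dn_prop: "0 < dn \<and> dn \<le> n \<and> (int dn mod int n, False) \<in> H"
proof -
  have "0 < n \<and> n \<le> n \<and> (int n mod int n, False) \<in> H" using n1 Hone by simp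
  thus ?thesis unfolding dn_def by (rule LeastI)
qed

lemma dn_min: "0 < k \<Longrightarrow> k \<le> n \<Longrightarrow> (int k mod int n, False) \<in> H \<Longrightarrow> dn \<le> k"
  unfolding dn_def by (rule Least_le) simp

definition d :: int where "d = int dn"

definition \<rho> :: "int \<times> bool" where "\<rho> = (d mod int n, False)"

lemma d_pos: "0 < d" and d_le: "d \<le> int n" and \<rho>H: "\<rho> \<in> H"
  using dn_prop by (auto simp: d_def \<rho>_def)

lemma \<rho>_pow: "\<rho> [^]\<^bsub>G\<^esub> (j::nat) = ((int j * d) mod int n, False)"
  unfolding \<rho>_def D_rot_pow by (simp add: mod_simps)

lemma d_dvd:
  assumes k: "0 \<le> k" "k \<le> int n" and kH: "(k mod int n, False) \<in> H"
  shows "d dvd k"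
proof -
  define q where "q = k div d"
  define r where "r = k mod d"
  have qn: "0 \<le> q" using k d_pos unfolding q_def by (simp add: pos_imp_zdiv_nonneg_iff)
  have kqr: "k = q * d + r" unfolding q_def r_def by (rule div_mult_mod_eq[symmetric])
  have r: "0 \<le> r" "r < d" using d_pos by (simp_all add: r_def)
  have qd: "0 \<le> q * d mod int n" "q * d mod int n < int n" using n1 by simp_all
  have "\<rho> [^]\<^bsub>G\<^esub> (nat q) = (q * d mod int n, False)" using qn by (simp add: \<rho>_pow)
  hence inH: "(q * d mod int n, False) \<in> H" using Hpow[OF \<rho>H, of "nat q"] by simp
  have "inv\<^bsub>G\<^esub> (q * d mod int n, False) = ((- (q * d mod int n)) mod int n, False)"
    using D_rot_inv[OF n1 qd] .
  hence "((- (q * d mod int n)) mod int n, False) \<in> H" using Hinv[OF inH] by simp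
  hence "(k mod int n, False) \<otimes>\<^bsub>G\<^esub> ((- (q * d mod int n)) mod int n, False) \<in> H" using Hmult[OF kH] by blast
  moreover have "(k mod int n + (- (q * d mod int n)) mod int n) mod int n = (k - q * d) mod int n"
    by (simp add: mod_simps)
  moreover have "k - q * d = r" using kqr by simp
  ultimately have rH: "(r mod int n, False) \<in> H" by (simp add: D_mult)
  have "r = 0"
  proof (rule ccontr)
    assume "r \<noteq> 0"
    hence "dn \<le> nat r" using dn_min[of "nat r"] r d_le rH by simp
    thus False using r d_def by simp
  qed
  thus ?thesis by (simp add: r_def dvd_eq_mod_eq_0)
qed

lemma d_dvd_n: "d dvd int n"
  using d_dvd[of "int n"] Hone by simp

definition m :: nat where "m = nat (int n div d)"

lemma m_pos: "0 < m" and nmd: "int n = int m * d"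
proof -
  obtain t where t: "int n = d * t" using d_dvd_n by (elim dvdE)
  have "0 < d * t" using t n1 by simp
  hence "0 < t" using d_pos by (simp add: zero_less_mult_iff)
  thus "0 < m" "int n = int m * d" using t d_pos by (simp_all add: m_def)
qed

lemma \<rho>_m: "\<rho> [^]\<^bsub>G\<^esub> m = \<one>\<^bsub>G\<^esub>"
  by (simp add: \<rho>_pow D_one nmd[symmetric])

lemma \<rho>_pow_small: "i < m \<Longrightarrow> \<rho> [^]\<^bsub>G\<^esub> i = (int i * d, False)"
proof -
  assume "i < m"
  hence "int i * d < int m * d" using d_pos by simp
  thus ?thesis using d_pos by (simp add: \<rho>_pow nmd[symmetric])
qed

lemma \<rho>_inj: "i < m \<Longrightarrow> j < m \<Longrightarrow> \<rho> [^]\<^bsub>G\<^esub> i = \<rho> [^]\<^bsub>G\<^esub> j \<Longrightarrow> i = j"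
  using d_pos by (simp add: \<rho>_pow_small)

lemma rot_cov: "(k, False) \<in> H \<Longrightarrow> \<exists>i<m. (k, False) = \<rho> [^]\<^bsub>G\<^esub> i"
proof -
  assume kH: "(k, False) \<in> H"
  have k: "0 \<le> k" "k < int n" using HG[OF kH] by (simp_all add: D_carrier)
  have "d dvd k" using d_dvd[of k] k kH by simp
  then obtain t where t: "k = d * t" by (elim dvdE)
  have "0 \<le> d * t" using t k by simp
  hence t0: "0 \<le> t" using d_pos by (simp add: zero_le_mult_iff)
  have "d * t < d * int m" using t k(2) nmd by (simp add: mult.commute)
  hence "t < int m" using d_pos by simp
  hence lt: "nat t < m" using t0 by linarith
  have "\<rho> [^]\<^bsub>G\<^esub> (nat t) = (int (nat t) * d, False)" by (rule \<rho>_pow_small[OF lt])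
  also have "\<dots> = (k, False)" using t t0 by (simp add: mult.commute)
  finally show ?thesis using lt by metis
qed

end


lemma klein4_mult: "(p, q) \<otimes>\<^bsub>klein4\<^esub> (r, s) = (p \<noteq> r, q \<noteq> s)"
  by (simp add: klein4_def)

lemma klein4_carrier: "carrier klein4 = UNIV" by (simp add: klein4_def)

lemma (in group) klein_sub:
  assumes a: "a \<in> carrier G" and b: "b \<in> carrier G" and aa: "a \<otimes> a = \<one>" and bb: "b \<otimes> b = \<one>"
    and ab: "a \<otimes> b = b \<otimes> a" and a1: "a \<noteq> \<one>" and b1: "b \<noteq> \<one>" and anb: "a \<noteq> b"
  shows "klein_subgroup G {\<one>, a, b, a \<otimes> b}"
proof -
  have c: "a \<otimes> b \<in> carrier G" using a b by simp
  have f1: "a \<otimes> (a \<otimes> b) = b" using a b aa by (simp add: m_assoc[symmetric])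
  have f2: "(a \<otimes> b) \<otimes> a = b" using a b aa ab by (simp add: m_assoc)
  have f3: "b \<otimes> (a \<otimes> b) = a" using a b bb ab by (simp add: m_assoc[symmetric])
  have f4: "(a \<otimes> b) \<otimes> b = a" using a b bb by (simp add: m_assoc)
  have f5: "(a \<otimes> b) \<otimes> (a \<otimes> b) = \<one>" using a b f3 aa by (simp add: m_assoc)
  have f6: "b \<otimes> a = a \<otimes> b" using ab by simp
  have d1: "a \<otimes> b \<noteq> \<one>"
  proof
    assume "a \<otimes> b = \<one>" hence "a \<otimes> (a \<otimes> b) = a" using a by simp
    thus False using f1 anb by simp
  qed
  have d2: "a \<otimes> b \<noteq> a"
  proof
    assume "a \<otimes> b = a" hence "a \<otimes> (a \<otimes> b) = a \<otimes> a" by simp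
    thus False using f1 aa b1 by simp
  qed
  have d3: "a \<otimes> b \<noteq> b"
  proof
    assume "a \<otimes> b = b" hence "(a \<otimes> b) \<otimes> b = b \<otimes> b" by simp
    thus False using f4 bb a1 by simp
  qed
  note facts = f1 f2 f3 f4 f5 f6 aa bb
  have sub: "subgroup {\<one>, a, b, a \<otimes> b} G"
  proof (rule subgroupI)
    show "{\<one>, a, b, a \<otimes> b} \<subseteq> carrier G" using a b by auto
    show "{\<one>, a, b, a \<otimes> b} \<noteq> {}" by simp
  next
    fix x assume "x \<in> {\<one>, a, b, a \<otimes> b}"
    moreover have "inv a = a" using a aa by (intro inv_equality) auto
    moreover have "inv b = b" using b bb by (intro inv_equality) auto
    moreover have "inv (a \<otimes> b) = a \<otimes> b" using c f5 by (intro inv_equality) auto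
    ultimately show "inv x \<in> {\<one>, a, b, a \<otimes> b}" by auto
  next
    fix x y assume "x \<in> {\<one>, a, b, a \<otimes> b}" "y \<in> {\<one>, a, b, a \<otimes> b}"
    thus "x \<otimes> y \<in> {\<one>, a, b, a \<otimes> b}" using a b c facts by auto
  qed
  define \<phi> where "\<phi> x = (x = a \<or> x = a \<otimes> b, x = b \<or> x = a \<otimes> b)" for x
  have hom: "\<phi> \<in> hom (G\<lparr>carrier := {\<one>, a, b, a \<otimes> b}\<rparr>) klein4"
  proof (rule homI)
    fix x show "\<phi> x \<in> carrier klein4" by (simp add: klein4_carrier)
  next
    fix x y assume "x \<in> carrier (G\<lparr>carrier := {\<one>, a, b, a \<otimes> b}\<rparr>)" "y \<in> carrier (G\<lparr>carrier := {\<one>, a, b, a \<otimes> b}\<rparr>)"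
    hence xy: "x \<in> {\<one>, a, b, a \<otimes> b}" "y \<in> {\<one>, a, b, a \<otimes> b}" by simp_all
    have v: "\<phi> \<one> = (False, False)" "\<phi> a = (True, False)" "\<phi> b = (False, True)" "\<phi> (a \<otimes> b) = (True, True)"
      using d1 d2 d3 a1 b1 anb by (auto simp: \<phi>_def)
    have "\<phi> (x \<otimes> y) = \<phi> x \<otimes>\<^bsub>klein4\<^esub> \<phi> y"
      using xy(1)
    proof (elim insertE emptyE)
      assume x: "x = \<one>" show ?thesis using xy(2) by (elim insertE emptyE) (simp_all add: x v klein4_mult a b c)
    next
      assume x: "x = a" show ?thesis using xy(2) by (elim insertE emptyE) (simp_all add: x v klein4_mult a b c facts)
    next
      assume x: "x = b" show ?thesis using xy(2) by (elim insertE emptyE) (simp_all add: x v klein4_mult a b c facts)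
    next
      assume x: "x = a \<otimes> b" show ?thesis using xy(2) by (elim insertE emptyE) (simp_all add: x v klein4_mult a b c facts)
    qed
    thus "\<phi> (x \<otimes>\<^bsub>G\<lparr>carrier := {\<one>, a, b, a \<otimes> b}\<rparr>\<^esub> y) = \<phi> x \<otimes>\<^bsub>klein4\<^esub> \<phi> y"
      by simp
  qed
  have bij: "bij_betw \<phi> (carrier (G\<lparr>carrier := {\<one>, a, b, a \<otimes> b}\<rparr>)) (carrier klein4)"
  proof -
    have "inj_on \<phi> {\<one>, a, b, a \<otimes> b}" using d1 d2 d3 a1 b1 anb
      unfolding inj_on_def \<phi>_def by auto
    moreover have "\<phi> ` {\<one>, a, b, a \<otimes> b} = UNIV"
    proof -
      have "\<phi> \<one> = (False, False)" "\<phi> a = (True, False)" "\<phi> b = (False, True)" "\<phi> (a \<otimes> b) = (True, True)"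
        using d1 d2 d3 a1 b1 anb by (auto simp: \<phi>_def)
      hence "{(False, False), (True, False), (False, True), (True, True)} \<subseteq> \<phi> ` {\<one>, a, b, a \<otimes> b}" by auto
      moreover have "(UNIV :: (bool \<times> bool) set) = {(False, False), (True, False), (False, True), (True, True)}"
        by (auto simp: UNIV_bool)
      ultimately show ?thesis by auto
    qed
    ultimately show ?thesis by (simp add: bij_betw_def klein4_carrier)
  qed
  show ?thesis unfolding klein_subgroup_def
    using sub isoI[OF hom bij] by (auto simp: is_iso_def)
qed


lemma klein_props:
  assumes grp: "group G" and K: "klein_subgroup G K"
  shows "finite K \<and> card K = 4 \<and> (\<forall>g\<in>K. g \<otimes>\<^bsub>G\<^esub> g = \<one>\<^bsub>G\<^esub>)"
proof -
  have sub: "subgroup K G" and iso: "G\<lparr>carrier := K\<rparr> \<cong> klein4" using K by (auto simp: klein_subgroup_def)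
  obtain \<phi> where \<phi>: "\<phi> \<in> iso (G\<lparr>carrier := K\<rparr>) klein4" using iso unfolding is_iso_def by blast
  have hom: "\<phi> \<in> hom (G\<lparr>carrier := K\<rparr>) klein4" and bij: "bij_betw \<phi> K UNIV"
    using \<phi> by (auto simp: iso_def klein4_carrier)
  have hm: "\<phi> (x \<otimes>\<^bsub>G\<^esub> y) = \<phi> x \<otimes>\<^bsub>klein4\<^esub> \<phi> y" if "x \<in> K" "y \<in> K" for x y
    using hom that unfolding hom_def by simp
  have fin: "finite K" using bij_betw_finite[OF bij] by simp
  have "card K = card (UNIV :: (bool \<times> bool) set)" using bij by (rule bij_betw_same_card)
  moreover have "card (UNIV::(bool \<times> bool) set) = card {(False,False),(False,True),(True,False),(True,True)}"
    by (rule arg_cong[where f=card]) (auto simp: UNIV_bool)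
  ultimately have c4: "card K = 4" by simp
  have one: "\<one>\<^bsub>G\<^esub> \<in> K" using subgroup.one_closed[OF sub] .
  have mc: "x \<otimes>\<^bsub>G\<^esub> y \<in> K" if "x \<in> K" "y \<in> K" for x y using subgroup.m_closed[OF sub that] .
  have inj: "inj_on \<phi> K" using bij by (simp add: bij_betw_def)
  have sq: "\<phi> (g \<otimes>\<^bsub>G\<^esub> g) = (False, False)" if "g \<in> K" for g
  proof -
    obtain p q where "\<phi> g = (p, q)" by (cases "\<phi> g")
    thus ?thesis using hm[OF that that] by (simp add: klein4_mult)
  qed
  have "\<one>\<^bsub>G\<^esub> \<otimes>\<^bsub>G\<^esub> \<one>\<^bsub>G\<^esub> = \<one>\<^bsub>G\<^esub>" using grp by (simp add: group.is_monoid monoid.l_one monoid.one_closed)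
  hence s1: "\<phi> \<one>\<^bsub>G\<^esub> = (False, False)" using sq[OF one] by simp
  have "\<forall>g\<in>K. g \<otimes>\<^bsub>G\<^esub> g = \<one>\<^bsub>G\<^esub>"
  proof
    fix g assume g: "g \<in> K"
    show "g \<otimes>\<^bsub>G\<^esub> g = \<one>\<^bsub>G\<^esub>" using inj_onD[OF inj _ mc[OF g g] one] sq[OF g] s1 by simp
  qed
  thus ?thesis using fin c4 by simp
qed

context Dsub begin

lemma rho_half: assumes "even m" shows "\<rho> [^]\<^bsub>G\<^esub> (m div 2) = (int n div 2, False)" and "int n = 2 * (int n div 2)"
proof -
  obtain t where t: "m = 2 * t" using assms by (elim evenE)
  have tm: "t < m" using t m_pos by simp
  have "int n = 2 * (int t * d)" using nmd t by simp
  thus "int n = 2 * (int n div 2)" by simp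
  show "\<rho> [^]\<^bsub>G\<^esub> (m div 2) = (int n div 2, False)"
    using \<rho>_pow_small[OF tm] t \<open>int n = 2 * (int t * d)\<close> by simp
qed

lemma klein_from:
  assumes \<tau>H: "(k0, True) \<in> H" and ev: "even m"
  shows "\<exists>K. klein_subgroup G K \<and> K \<subseteq> H"
proof -
  interpret Gg: group G by (rule Gg)
  define x where "x = int n div 2"
  have n2: "int n = 2 * x" using rho_half(2)[OF ev] by (simp add: x_def)
  have aH: "(x, False) \<in> H" using Hpow[OF \<rho>H, of "m div 2"] rho_half(1)[OF ev] by (simp add: x_def)
  have k0: "0 \<le> k0" "k0 < int n" using HG[OF \<tau>H] by (simp_all add: D_carrier)
  have x: "0 < x" "x < int n" using n2 n1 by simp_all
  have a: "(x, False) \<in> carrier G" and b: "(k0, True) \<in> carrier G" using HG aH \<tau>H by auto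
  have aa: "(x, False) \<otimes>\<^bsub>G\<^esub> (x, False) = \<one>\<^bsub>G\<^esub>" using n2 by (simp add: D_mult D_one)
  have bb: "(k0, True) \<otimes>\<^bsub>G\<^esub> (k0, True) = \<one>\<^bsub>G\<^esub>" by (simp add: D_mult D_one)
  have ab: "(x, False) \<otimes>\<^bsub>G\<^esub> (k0, True) = (k0, True) \<otimes>\<^bsub>G\<^esub> (x, False)"
  proof -
    have "(x + k0) mod int n = (k0 - x + int n) mod int n" by (simp add: n2 algebra_simps)
    also have "\<dots> = (k0 - x) mod int n" by simp
    finally show ?thesis by (simp add: D_mult)
  qed
  have "klein_subgroup G {\<one>\<^bsub>G\<^esub>, (x, False), (k0, True), (x, False) \<otimes>\<^bsub>G\<^esub> (k0, True)}"
    by (rule Gg.klein_sub[OF a b aa bb ab]) (use x in \<open>simp_all add: D_one\<close>)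
  moreover have "{\<one>\<^bsub>G\<^esub>, (x, False), (k0, True), (x, False) \<otimes>\<^bsub>G\<^esub> (k0, True)} \<subseteq> H"
    using Hone aH \<tau>H Hmult[OF aH \<tau>H] by (simp add: D_one)
  ultimately show ?thesis by blast
qed

lemma rot_sq: assumes "(y, False) \<in> carrier G" "(y, False) \<otimes>\<^bsub>G\<^esub> (y, False) = \<one>\<^bsub>G\<^esub>"
  shows "y = 0 \<or> int n = 2 * y"
proof -
  have y: "0 \<le> y" "y < int n" using assms(1) by (simp_all add: D_carrier)
  have m0: "(y + y) mod int n = 0" using assms(2) by (simp add: D_mult D_one)
  show ?thesis
  proof (cases "y + y < int n")
    case True
    hence "(y + y) mod int n = y + y" using y by (simp add: mod_pos_pos_trivial)
    thus ?thesis using m0 by simp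
  next
    case False
    have "(y + y - int n + int n) mod int n = (y + y - int n) mod int n" by (rule mod_add_self2)
    hence "(y + y) mod int n = (y + y - int n) mod int n" by simp
    also have "\<dots> = y + y - int n" by (rule mod_pos_pos_trivial) (use False y in linarith)+
    finally show ?thesis using m0 by simp
  qed
qed

lemma klein_gives:
  assumes K: "klein_subgroup G K" and KH: "K \<subseteq> H"
  shows "(\<exists>k0. (k0, True) \<in> H) \<and> even m"
proof -
  have props: "finite K" "card K = 4" "\<forall>g\<in>K. g \<otimes>\<^bsub>G\<^esub> g = \<one>\<^bsub>G\<^esub>" using klein_props[OF Gg K] by auto
  have subK: "subgroup K G" using K by (simp add: klein_subgroup_def)
  have KG: "g \<in> carrier G" if "g \<in> K" for g using HG KH that by blast
  have two: "\<exists>k1 k2. k1 \<noteq> k2 \<and> (k1, True) \<in> K \<and> (k2, True) \<in> K"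
  proof (rule ccontr)
    assume no: "\<not> ?thesis"
    define A where "A = {(0::int, False), (int n div 2, False)}"
    define Rf where "Rf = {g \<in> K. snd g}"
    have "K \<subseteq> A \<union> Rf"
    proof
      fix g assume g: "g \<in> K"
      obtain y b where yb: "g = (y, b)" by (cases g)
      show "g \<in> A \<union> Rf"
      proof (cases b)
        case True thus ?thesis using g yb by (simp add: Rf_def)
      next
        case False
        have "y = 0 \<or> int n = 2 * y" using rot_sq[of y] KG[OF g] props(3) g yb False by simp
        hence "y = 0 \<or> y = int n div 2" by auto
        thus ?thesis using yb False by (auto simp: A_def)
      qed
    qed
    hence "card K \<le> card (A \<union> Rf)" by (rule card_mono[rotated]) (simp add: A_def Rf_def props(1))
    also have "\<dots> \<le> card A + card Rf" by (rule card_Un_le)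
    also have "card A \<le> 2" by (simp add: A_def card_insert_le_m1)
    also have "card Rf \<le> 1"
    proof -
      have "finite Rf" using props(1) by (simp add: Rf_def)
      moreover have "\<forall>a\<in>Rf. \<forall>b\<in>Rf. a = b"
      proof (intro ballI)
        fix a b assume "a \<in> Rf" "b \<in> Rf"
        thus "a = b" using no by (cases a, cases b) (auto simp: Rf_def)
      qed
      ultimately show ?thesis using card_le_Suc0_iff_eq[of Rf] by simp
    qed
    finally show False using props(2) by simp
  qed
  then obtain k1 k2 where k12: "k1 \<noteq> k2" "(k1, True) \<in> K" "(k2, True) \<in> K" by blast
  have refl: "\<exists>k0. (k0, True) \<in> H" using k12 KH by blast
  define z where "z = (k1 - k2) mod int n"
  have zK: "(z, False) \<in> K" using subgroup.m_closed[OF subK k12(2,3)] by (simp add: D_mult z_def)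
  have k: "0 \<le> k1" "k1 < int n" "0 \<le> k2" "k2 < int n" using KG k12 by (auto simp: D_carrier)
  have z0: "z \<noteq> 0"
  proof
    assume "z = 0"
    hence "k1 mod int n = k2 mod int n" by (simp add: z_def mod_eq_dvd_iff dvd_eq_mod_eq_0)
    thus False using k k12(1) by (simp add: mod_pos_pos_trivial)
  qed
  have "z = 0 \<or> int n = 2 * z" using rot_sq[of z] KG[OF zK] props(3) zK by simp
  hence nz: "int n = 2 * z" using z0 by simp
  have z: "0 \<le> z" "z \<le> int n" using nz by simp_all
  have "z < int n" using nz n1 by simp
  hence "(z mod int n, False) \<in> H" using zK KH z by (auto simp: mod_pos_pos_trivial)
  hence "d dvd z" using d_dvd z by blast
  then obtain t where t: "z = d * t" by (elim dvdE)
  have "int m * d = (2 * t) * d" using nmd nz t by (auto simp: algebra_simps)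
  hence "int m = 2 * t" using d_pos by (simp only: mult_right_cancel)
  hence "even m" by (metis even_mult_iff even_numeral even_of_nat)
  thus ?thesis using refl by simp
qed

end


context Dsub begin

abbreviation "SH \<equiv> G\<lparr>carrier := H\<rparr>"

lemma SH_group: "group SH" using subgroup.subgroup_is_group[OF sub Gg] .

lemma SH_cext: assumes "\<And>a b c. a \<in> H \<Longrightarrow> b \<in> H \<Longrightarrow> c \<in> H \<Longrightarrow> d2r SH u a b c \<in> \<int>"
  shows "cext SH u"
  unfolding cext_def cext_axioms_def using SH_group assms by simp

lemma snd_D_mult: "snd (x \<otimes>\<^bsub>G\<^esub> y) = (snd x \<noteq> snd y)"
  by (cases x, cases y) (simp add: D_mult)

lemma H_cyclic_splits:
  assumes norefl: "\<And>g. g \<in> H \<Longrightarrow> \<not> snd g"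
    and coc: "\<And>a b c. a \<in> H \<Longrightarrow> b \<in> H \<Longrightarrow> c \<in> H \<Longrightarrow> d2r SH u a b c \<in> \<int>"
  shows "splits SH u"
proof -
  interpret C: cext SH u by (rule SH_cext[OF coc])
  show ?thesis
  proof (rule C.cyclic_splits[of \<rho> m])
    show "\<rho> \<in> carrier SH" using \<rho>H by simp
    show "0 < m" by (rule m_pos)
    show "\<rho> [^]\<^bsub>SH\<^esub> m = \<one>\<^bsub>SH\<^esub>" using \<rho>_m by (simp add: pow_upd)
  next
    fix g assume "g \<in> carrier SH"
    hence g: "g \<in> H" by simp
    obtain k b where kb: "g = (k, b)" by (cases g)
    have "\<not> b" using norefl[OF g] kb by simp
    thus "\<exists>i<m. g = \<rho> [^]\<^bsub>SH\<^esub> i" using rot_cov[of k] g kb by (simp add: pow_upd)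
  next
    fix i j assume "i < m" "j < m" "\<rho> [^]\<^bsub>SH\<^esub> i = \<rho> [^]\<^bsub>SH\<^esub> j"
    thus "i = j" using \<rho>_inj by (simp add: pow_upd)
  qed
qed

lemma tau_facts:
  assumes \<tau>H: "(k0, True) \<in> H"
  shows "(k0, True) \<otimes>\<^bsub>G\<^esub> (k0, True) = \<one>\<^bsub>G\<^esub>"
    and "(k0, True) \<otimes>\<^bsub>G\<^esub> \<rho> \<otimes>\<^bsub>G\<^esub> (k0, True) \<otimes>\<^bsub>G\<^esub> \<rho> = \<one>\<^bsub>G\<^esub>"
    and "\<And>g. g \<in> H \<Longrightarrow> \<exists>i e. i < m \<and> g = \<rho> [^]\<^bsub>G\<^esub> i \<otimes>\<^bsub>G\<^esub> (if e then (k0, True) else \<one>\<^bsub>G\<^esub>)"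
    and "\<And>i j e f. i < m \<Longrightarrow> j < m \<Longrightarrow> \<rho> [^]\<^bsub>G\<^esub> i \<otimes>\<^bsub>G\<^esub> (if e then (k0, True) else \<one>\<^bsub>G\<^esub>)
            = \<rho> [^]\<^bsub>G\<^esub> j \<otimes>\<^bsub>G\<^esub> (if f then (k0, True) else \<one>\<^bsub>G\<^esub>) \<Longrightarrow> i = j \<and> e = f"
proof -
  interpret Gg: group G by (rule Gg)
  have \<tau>: "(k0, True) \<in> carrier G" using HG[OF \<tau>H] .
  have \<rho>c: "\<rho> \<in> carrier G" using HG[OF \<rho>H] .
  show tt: "(k0, True) \<otimes>\<^bsub>G\<^esub> (k0, True) = \<one>\<^bsub>G\<^esub>" by (simp add: D_mult D_one)
  show "(k0, True) \<otimes>\<^bsub>G\<^esub> \<rho> \<otimes>\<^bsub>G\<^esub> (k0, True) \<otimes>\<^bsub>G\<^esub> \<rho> = \<one>\<^bsub>G\<^esub>"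
    by (simp add: \<rho>_def D_mult D_one mod_simps)
  show "\<exists>i e. i < m \<and> g = \<rho> [^]\<^bsub>G\<^esub> i \<otimes>\<^bsub>G\<^esub> (if e then (k0, True) else \<one>\<^bsub>G\<^esub>)" if g: "g \<in> H" for g
  proof -
    obtain k b where kb: "g = (k, b)" by (cases g)
    show ?thesis
    proof (cases b)
      case False
      obtain i where i: "i < m" "(k, False) = \<rho> [^]\<^bsub>G\<^esub> i" using rot_cov[of k] g kb False by auto
      hence "g = \<rho> [^]\<^bsub>G\<^esub> i \<otimes>\<^bsub>G\<^esub> \<one>\<^bsub>G\<^esub>" using kb False \<rho>c by simp
      thus ?thesis using i by (intro exI[of _ i] exI[of _ False]) simp
    next
      case True
      have gt: "g \<otimes>\<^bsub>G\<^esub> (k0, True) \<in> H" using Hmult[OF g \<tau>H] .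
      obtain k' where k': "g \<otimes>\<^bsub>G\<^esub> (k0, True) = (k', False)" using kb True by (simp add: D_mult)
      obtain i where i: "i < m" "(k', False) = \<rho> [^]\<^bsub>G\<^esub> i" using rot_cov[of k'] gt k' by auto
      have gc: "g \<in> carrier G" using HG[OF g] .
      have "g = (g \<otimes>\<^bsub>G\<^esub> (k0, True)) \<otimes>\<^bsub>G\<^esub> (k0, True)" using gc \<tau> tt by (simp add: Gg.m_assoc)
      hence "g = \<rho> [^]\<^bsub>G\<^esub> i \<otimes>\<^bsub>G\<^esub> (k0, True)" using k' i by simp
      thus ?thesis using i by (intro exI[of _ i] exI[of _ True]) simp
    qed
  qed
  show "i = j \<and> e = f" if ij: "i < m" "j < m" and eq: "\<rho> [^]\<^bsub>G\<^esub> i \<otimes>\<^bsub>G\<^esub> (if e then (k0, True) else \<one>\<^bsub>G\<^esub>)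
            = \<rho> [^]\<^bsub>G\<^esub> j \<otimes>\<^bsub>G\<^esub> (if f then (k0, True) else \<one>\<^bsub>G\<^esub>)" for i j e f
  proof -
    have "snd (\<rho> [^]\<^bsub>G\<^esub> i \<otimes>\<^bsub>G\<^esub> (if e then (k0, True) else \<one>\<^bsub>G\<^esub>)) = e"
      using \<rho>_pow_small[OF ij(1)] by (simp add: snd_D_mult D_one)
    moreover have "snd (\<rho> [^]\<^bsub>G\<^esub> j \<otimes>\<^bsub>G\<^esub> (if f then (k0, True) else \<one>\<^bsub>G\<^esub>)) = f"
      using \<rho>_pow_small[OF ij(2)] by (simp add: snd_D_mult D_one)
    ultimately have ef: "e = f" using eq by simp
    have "\<rho> [^]\<^bsub>G\<^esub> i = \<rho> [^]\<^bsub>G\<^esub> j"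
      using eq ef Gg.r_cancel[of "if f then (k0, True) else \<one>\<^bsub>G\<^esub>" "\<rho> [^]\<^bsub>G\<^esub> i" "\<rho> [^]\<^bsub>G\<^esub> j"] \<tau> \<rho>c
      by (cases f) auto
    thus ?thesis using \<rho>_inj ij ef by blast
  qed
qed

lemma H_dih_splits:
  assumes \<tau>H: "(k0, True) \<in> H"
    and coc: "\<And>a b c. a \<in> H \<Longrightarrow> b \<in> H \<Longrightarrow> c \<in> H \<Longrightarrow> d2r SH u a b c \<in> \<int>"
    and cond: "odd m \<or> u (\<rho> [^]\<^bsub>G\<^esub> (m div 2)) (k0, True) - u (k0, True) (\<rho> [^]\<^bsub>G\<^esub> (m div 2)) \<in> \<int>"
  shows "splits SH u"
proof -
  interpret C: cext SH u by (rule SH_cext[OF coc])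
  note tf = tau_facts[OF \<tau>H]
  have oneSH: "\<one>\<^bsub>SH\<^esub> = \<one>\<^bsub>G\<^esub>" by simp
  show ?thesis
  proof (rule C.dihedral_splits[of \<rho> "(k0, True)" m])
    show "\<rho> \<in> carrier SH" using \<rho>H by simp
    show "(k0, True) \<in> carrier SH" using \<tau>H by simp
    show "0 < m" by (rule m_pos)
    show "\<rho> [^]\<^bsub>SH\<^esub> m = \<one>\<^bsub>SH\<^esub>" using \<rho>_m by (simp add: pow_upd)
    show "(k0, True) \<otimes>\<^bsub>SH\<^esub> (k0, True) = \<one>\<^bsub>SH\<^esub>" using tf(1) by simp
    show "(k0, True) \<otimes>\<^bsub>SH\<^esub> \<rho> \<otimes>\<^bsub>SH\<^esub> (k0, True) \<otimes>\<^bsub>SH\<^esub> \<rho> = \<one>\<^bsub>SH\<^esub>" using tf(2) by simp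
    show "odd m \<or> u (\<rho> [^]\<^bsub>SH\<^esub> (m div 2)) (k0, True) - u (k0, True) (\<rho> [^]\<^bsub>SH\<^esub> (m div 2)) \<in> \<int>"
      using cond by (simp add: pow_upd)
  next
    fix g assume "g \<in> carrier SH"
    thus "\<exists>i e. i < m \<and> g = \<rho> [^]\<^bsub>SH\<^esub> i \<otimes>\<^bsub>SH\<^esub> (if e then (k0, True) else \<one>\<^bsub>SH\<^esub>)"
      unfolding oneSH using tf(3)[of g] by (simp add: pow_upd)
  next
    fix i j e f assume "i < m" "j < m"
      "\<rho> [^]\<^bsub>SH\<^esub> i \<otimes>\<^bsub>SH\<^esub> (if e then (k0, True) else \<one>\<^bsub>SH\<^esub>) = \<rho> [^]\<^bsub>SH\<^esub> j \<otimes>\<^bsub>SH\<^esub> (if f then (k0, True) else \<one>\<^bsub>SH\<^esub>)"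
    thus "i = j \<and> e = f" unfolding oneSH using tf(4)[of i j e f] by (simp add: pow_upd)
  qed
qed

lemma H_beta_half:
  assumes \<tau>H: "(k0, True) \<in> H" and ev: "even m"
    and coc: "\<And>a b c. a \<in> H \<Longrightarrow> b \<in> H \<Longrightarrow> c \<in> H \<Longrightarrow> d2r SH u a b c \<in> \<int>"
  shows "2 * (u (int n div 2, False) (k0, True) - u (k0, True) (int n div 2, False)) \<in> \<int>"
proof -
  interpret C: cext SH u by (rule SH_cext[OF coc])
  note tf = tau_facts[OF \<tau>H]
  have "2 * (u (\<rho> [^]\<^bsub>SH\<^esub> (m div 2)) (k0, True) - u (k0, True) (\<rho> [^]\<^bsub>SH\<^esub> (m div 2))) \<in> \<int>"
    by (rule C.beta_half) (use \<rho>H \<tau>H m_pos \<rho>_m tf ev in \<open>simp_all add: pow_upd\<close>)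
  thus ?thesis using rho_half(1)[OF ev] by (simp add: pow_upd)
qed

end


definition qq :: "nat \<Rightarrow> int \<times> bool \<Rightarrow> int \<times> bool \<Rightarrow> int" where
  "qq n a b = (fst a + (if snd a then - fst b else fst b)) div int n"

definition f0 :: "nat \<Rightarrow> (int \<times> bool) list \<Rightarrow> int" where
  "f0 n xs = (if snd (xs!0) then qq n (xs!1) (xs!2) else 0)"

lemma div_aux1: "(n::int) > 0 \<Longrightarrow> (A mod n + t) div n = (A + t) div n - A div n"
proof -
  assume n: "n > 0"
  have "A + t = (A mod n + t) + n * (A div n)" by simp
  hence "(A + t) div n = (A mod n + t + n * (A div n)) div n" by simp
  also have "\<dots> = (A div n) + (A mod n + t) div n" using div_mult_self2[of n "A mod n + t" "A div n"] n by simp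
  finally show ?thesis by simp
qed

lemma div_aux1': "(n::int) > 0 \<Longrightarrow> (A mod n - t) div n = (A - t) div n - A div n"
  using div_aux1[of n A "- t"] by simp

lemma div_aux2: "(n::int) > 0 \<Longrightarrow> (k + B mod n) div n = (k + B) div n - B div n"
  using div_aux1[of n B k] by (simp add: add.commute)

lemma div_aux2': "(n::int) > 0 \<Longrightarrow> (k - B mod n) div n = (k - B) div n + B div n"
proof -
  assume n: "n > 0"
  have e: "B div n * n + B mod n = B" by (rule div_mult_mod_eq)
  have "k - B = (k - B mod n) - B div n * n" using e by linarith
  hence "k - B = (k - B mod n) + n * (- (B div n))" by (simp add: algebra_simps)
  hence "(k - B) div n = ((k - B mod n) + n * (- (B div n))) div n" by (rule arg_cong)
  also have "\<dots> = - (B div n) + (k - B mod n) div n" using div_mult_self2[of n "k - B mod n" "- (B div n)"] n by simp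
  finally show ?thesis by simp
qed

lemma qq_cob:
  assumes n: "n \<ge> 1"
  shows "qq n b c - qq n (a \<otimes>\<^bsub>dihedral n\<^esub> b) c + qq n a (b \<otimes>\<^bsub>dihedral n\<^esub> c) - qq n a b
       = (if snd a then 2 * qq n b c else 0)"
proof -
  obtain k1 b1 where a: "a = (k1, b1)" by (cases a)
  obtain k2 b2 where b: "b = (k2, b2)" by (cases b)
  obtain k3 b3 where c: "c = (k3, b3)" by (cases c)
  have np: "int n > 0" using n by simp
  show ?thesis unfolding a b c
    by (cases b1; cases b2; simp add: qq_def D_mult div_aux1[OF np] div_aux1'[OF np] div_aux2[OF np] div_aux2'[OF np] algebra_simps)
qed

lemma dd_zero:
  assumes "group S" "a \<in> carrier S" "b \<in> carrier S" "c \<in> carrier S" "e \<in> carrier S"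
  shows "d2r S v b c e - d2r S v (a \<otimes>\<^bsub>S\<^esub> b) c e + d2r S v a (b \<otimes>\<^bsub>S\<^esub> c) e - d2r S v a b (c \<otimes>\<^bsub>S\<^esub> e) + d2r S v a b c = 0"
  using assms by (simp add: d2r_def group.is_monoid monoid.m_assoc)

lemma f0_prim:
  assumes n: "n \<ge> 1" and abc: "a \<in> carrier (dihedral n)" "b \<in> carrier (dihedral n)" "c \<in> carrier (dihedral n)"
  shows "d2r (dihedral n) (\<lambda>x y. real_of_int (qq n x y) / 2) a b c = real_of_int (f0 n [a,b,c])"
proof -
  have "d2r (dihedral n) (\<lambda>x y. real_of_int (qq n x y) / 2) a b c
      = real_of_int (qq n b c - qq n (a \<otimes>\<^bsub>dihedral n\<^esub> b) c + qq n a (b \<otimes>\<^bsub>dihedral n\<^esub> c) - qq n a b) / 2"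
    by (simp add: d2r_def diff_divide_distrib add_divide_distrib)
  also have "\<dots> = real_of_int (f0 n [a,b,c])" unfolding qq_cob[OF n] by (simp add: f0_def)
  finally show ?thesis .
qed

lemma f0_cocycle:
  assumes n: "n \<ge> 1"
  shows "cocycle (dihedral n) 3 (f0 n)"
  unfolding cocycle3
proof
  fix xs assume "xs \<in> tuples (dihedral n) 4"
  then obtain a b c e where xs: "xs = [a,b,c,e]" and abce: "a \<in> carrier (dihedral n)" "b \<in> carrier (dihedral n)"
    "c \<in> carrier (dihedral n)" "e \<in> carrier (dihedral n)" unfolding tuples4 by blast
  interpret Gg: group "dihedral n" by (rule D_group[OF n])
  let ?v = "\<lambda>x y. real_of_int (qq n x y) / 2"
  have "real_of_int (cobound (dihedral n) 3 (f0 n) [a,b,c,e])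
     = d2r (dihedral n) ?v b c e - d2r (dihedral n) ?v (a \<otimes>\<^bsub>dihedral n\<^esub> b) c e
       + d2r (dihedral n) ?v a (b \<otimes>\<^bsub>dihedral n\<^esub> c) e - d2r (dihedral n) ?v a b (c \<otimes>\<^bsub>dihedral n\<^esub> e)
       + d2r (dihedral n) ?v a b c"
    unfolding cobound3_eq using abce by (simp add: f0_prim[OF n])
  also have "\<dots> = 0" by (rule dd_zero[OF Gg.is_group abce])
  finally show "cobound (dihedral n) 3 (f0 n) xs = 0" using xs by simp
qed

lemma f0_beta:
  assumes n2: "int n = 2 * x" and k0: "0 \<le> k0" "k0 < int n"
  shows "qq n (x, False) (k0, True) - qq n (k0, True) (x, False) = 1"
proof -
  have np: "int n > 0" using n2 k0 by simp
  show ?thesis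
  proof (cases "k0 < x")
    case True
    have "(x + k0) div int n = 0" using True k0 n2 by (simp add: div_pos_pos_trivial)
    moreover have "(k0 - x) div int n = -1"
    proof -
      have "(k0 - x + int n) div int n = 0" using True k0 n2 by (simp add: div_pos_pos_trivial)
      moreover have "(k0 - x + int n) div int n = (k0 - x) div int n + 1" using np by simp
      ultimately show ?thesis by simp
    qed
    ultimately show ?thesis by (simp add: qq_def)
  next
    case False
    have "(k0 - x) div int n = 0" using False k0 n2 by (simp add: div_pos_pos_trivial)
    moreover have "(x + k0) div int n = 1"
    proof -
      have "(x + k0 - int n) div int n = 0" using False k0 n2 by (simp add: div_pos_pos_trivial)
      moreover have "(x + k0 - int n + int n) div int n = (x + k0 - int n) div int n + 1"
        using np div_add_self2[of "int n" "x + k0 - int n"] by simp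
      ultimately show ?thesis by simp
    qed
    ultimately show ?thesis by (simp add: qq_def)
  qed
qed


lemma D_finite: "finite (carrier (dihedral n))"
proof -
  have "carrier (dihedral n) \<subseteq> {0..<int n} \<times> UNIV" by (auto simp: D_carrier)
  thus ?thesis by (rule finite_subset) simp
qed

lemma d2r_upd: "d2r (G\<lparr>carrier := H\<rparr>) u a b c = d2r G u a b c" by (simp add: d2r_def)

lemma d2r_diff: "d2r S (\<lambda>x y. u x y - v x y) a b c = d2r S u a b c - d2r S v a b c"
  by (simp add: d2r_def)

lemma splits_self: "splits (G\<lparr>carrier := carrier G\<rparr>) u \<Longrightarrow> splits G u"
  by (simp add: splits_def)

lemma x_comm: "int n = 2 * x \<Longrightarrow> (x, False) \<otimes>\<^bsub>dihedral n\<^esub> (k0, True) = (k0, True) \<otimes>\<^bsub>dihedral n\<^esub> (x, False)"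
proof -
  assume n2: "int n = 2 * x"
  have "(x + k0) mod int n = (k0 - x + int n) mod int n" by (simp add: n2 algebra_simps)
  also have "\<dots> = (k0 - x) mod int n" by simp
  finally show ?thesis by (simp add: D_mult)
qed

lemma cocycle_zero: "cocycle G 3 (\<lambda>xs. 0)"
  by (simp add: cocycle3 cobound_def)

theorem proposition2p3:
  fixes n :: nat and H :: "(int \<times> bool) set"
  assumes "n \<ge> 1" and "subgroup H (dihedral n)"
  shows "((\<exists>K. klein_subgroup (dihedral n) K \<and> K \<subseteq> H) \<longrightarrow>
            res_injective (dihedral n) H 3 \<and> res_surjective (dihedral n) H 3)
       \<and> ((\<nexists>K. klein_subgroup (dihedral n) K \<and> K \<subseteq> H) \<longrightarrow>
            res_zero (dihedral n) H 3)"
proof -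
  interpret D: Dsub n H by (rule Dsub.intro[OF assms])
  have Gg: "group (dihedral n)" by (rule D_group[OF assms(1)])
  interpret DG: Dsub n "carrier (dihedral n)" by (rule Dsub.intro[OF assms(1) group.subgroup_self[OF Gg]])
  have finH: "finite H" using D.HG D_finite by (meson finite_subset subsetI)
  have finG: "finite (carrier (dihedral n))" by (rule D_finite)
  have GG: "dihedral n\<lparr>carrier := carrier (dihedral n)\<rparr> = dihedral n" by simp
  have primG: "\<exists>u. (\<forall>a\<in>carrier (dihedral n). \<forall>b\<in>carrier (dihedral n). \<forall>c\<in>carrier (dihedral n). d2r (dihedral n) u a b c = f [a,b,c])"
    if "cocycle (dihedral n) 3 f" for f
    using lemmaB[OF Gg finG that] .
  show ?thesis
  proof (rule conjI; rule impI)
    assume "\<exists>K. klein_subgroup (dihedral n) K \<and> K \<subseteq> H"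
    then obtain K where K: "klein_subgroup (dihedral n) K" "K \<subseteq> H" by blast
    obtain k0 where \<tau>H: "(k0, True) \<in> H" and evH: "even D.m" using D.klein_gives[OF K] by blast
    have evG: "even DG.m" using DG.klein_gives[OF K(1)] K(2) D.HG by blast
    define x where "x = int n div 2"
    have n2: "int n = 2 * x" using D.rho_half(2)[OF evH] by (simp add: x_def)
    have xH: "(x, False) \<in> H" using D.Hpow[OF D.\<rho>H, of "D.m div 2"] D.rho_half(1)[OF evH] by (simp add: x_def)
    have xG: "DG.\<rho> [^]\<^bsub>dihedral n\<^esub> (DG.m div 2) = (x, False)" using DG.rho_half(1)[OF evG] by (simp add: x_def)
    have xH': "D.\<rho> [^]\<^bsub>dihedral n\<^esub> (D.m div 2) = (x, False)" using D.rho_half(1)[OF evH] by (simp add: x_def)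
    have \<tau>G: "(k0, True) \<in> carrier (dihedral n)" using D.HG[OF \<tau>H] .
    have k0: "0 \<le> k0" "k0 < int n" using \<tau>G by (simp_all add: D_carrier)
    have xc: "(x, False) \<otimes>\<^bsub>dihedral n\<^esub> (k0, True) = (k0, True) \<otimes>\<^bsub>dihedral n\<^esub> (x, False)" by (rule x_comm[OF n2])
    show "res_injective (dihedral n) H 3 \<and> res_surjective (dihedral n) H 3"
    proof
      show "res_injective (dihedral n) H 3" unfolding res_injective_def
      proof (intro allI impI)
        fix f assume fa: "cocycle (dihedral n) 3 f \<and> coboundary (dihedral n\<lparr>carrier := H\<rparr>) 3 f"
        obtain u where u: "\<forall>a\<in>carrier (dihedral n). \<forall>b\<in>carrier (dihedral n). \<forall>c\<in>carrier (dihedral n). d2r (dihedral n) u a b c = f [a,b,c]"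
          using primG fa by blast
        have primH: "\<forall>a\<in>carrier D.SH. \<forall>b\<in>carrier D.SH. \<forall>c\<in>carrier D.SH. d2r D.SH u a b c = f [a,b,c]"
          using u D.HG by (simp add: d2r_upd)
        have "splits D.SH u" by (rule lemmaA2[OF D.SH_group _ primH]) (use finH fa in simp_all)
        hence "u (x, False) (k0, True) - u (k0, True) (x, False) \<in> \<int>"
          by (rule splits_comm) (use xH \<tau>H xc in simp_all)
        hence "splits DG.SH u"
          by (intro DG.H_dih_splits[OF \<tau>G]) (use u xG in \<open>simp_all add: d2r_upd\<close>)
        hence "splits (dihedral n) u" by (rule splits_self)
        thus "coboundary (dihedral n) 3 f" by (rule lemmaA1[OF u _ Gg])
      qed
    next
      show "res_surjective (dihedral n) H 3" unfolding res_surjective_def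
      proof (intro allI impI)
        fix c assume cc: "cocycle (dihedral n\<lparr>carrier := H\<rparr>) 3 c"
        obtain uc where uc: "\<forall>a\<in>carrier D.SH. \<forall>b\<in>carrier D.SH. \<forall>e\<in>carrier D.SH. d2r D.SH uc a b e = c [a,b,e]"
          using lemmaB[OF D.SH_group _ cc] finH by auto
        have cocH: "d2r D.SH uc a b e \<in> \<int>" if "a \<in> H" "b \<in> H" "e \<in> H" for a b e using uc that by simp
        define \<beta> where "\<beta> = uc (x, False) (k0, True) - uc (k0, True) (x, False)"
        have hb: "2 * \<beta> \<in> \<int>" using D.H_beta_half[OF \<tau>H evH cocH] by (simp add: \<beta>_def x_def)
        show "\<exists>f. cocycle (dihedral n) 3 f \<and> coboundary (dihedral n\<lparr>carrier := H\<rparr>) 3 (\<lambda>xs. c xs - f xs)"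
        proof (cases "\<beta> \<in> \<int>")
          case True
          have "splits D.SH uc"
            by (rule D.H_dih_splits[OF \<tau>H cocH]) (use True xH' in \<open>simp_all add: \<beta>_def\<close>)
          hence "coboundary D.SH 3 (\<lambda>xs. c xs - 0)" by (intro lemmaA1[OF _ _ D.SH_group]) (use uc in simp_all)
          thus ?thesis using cocycle_zero by blast
        next
          case False
          define u' where "u' x y = uc x y - real_of_int (qq n x y) / 2" for x y
          have prim': "\<forall>a\<in>carrier D.SH. \<forall>b\<in>carrier D.SH. \<forall>e\<in>carrier D.SH. d2r D.SH u' a b e = c [a,b,e] - f0 n [a,b,e]"
          proof (intro ballI)
            fix a b e assume abe: "a \<in> carrier D.SH" "b \<in> carrier D.SH" "e \<in> carrier D.SH"
            have abeG: "a \<in> carrier (dihedral n)" "b \<in> carrier (dihedral n)" "e \<in> carrier (dihedral n)" using abe D.HG by auto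
            have "d2r D.SH u' a b e = d2r D.SH uc a b e - d2r (dihedral n) (\<lambda>x y. real_of_int (qq n x y) / 2) a b e"
              unfolding u'_def d2r_diff by (simp add: d2r_upd)
            thus "d2r D.SH u' a b e = c [a,b,e] - f0 n [a,b,e]" using uc abe f0_prim[OF assms(1) abeG] by simp
          qed
          have coc': "d2r D.SH u' a b e \<in> \<int>" if "a \<in> H" "b \<in> H" "e \<in> H" for a b e
          proof -
            have "d2r D.SH u' a b e = real_of_int (c [a,b,e] - f0 n [a,b,e])" using prim' that by simp
            thus ?thesis by simp
          qed
          obtain N where N: "2 * \<beta> = of_int N" using hb by (auto elim: Ints_cases)
          have "odd N"
          proof
            assume "even N" then obtain t where "N = 2 * t" by (elim evenE)
            hence "\<beta> = of_int t" using N by simp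
            thus False using False by simp
          qed
          then obtain t where t: "N = 2 * t + 1" by (elim oddE)
          have "u' (x, False) (k0, True) - u' (k0, True) (x, False) = \<beta> - 1 / 2"
            using f0_beta[OF n2 k0] unfolding u'_def \<beta>_def
            by (simp add: diff_divide_distrib[symmetric] of_int_diff[symmetric] algebra_simps)
          also have "\<dots> = of_int t" using N t by (simp add: field_simps)
          finally have b': "u' (x, False) (k0, True) - u' (k0, True) (x, False) \<in> \<int>" by simp
          have "splits D.SH u'"
            by (rule D.H_dih_splits[OF \<tau>H coc']) (use b' xH' in simp_all)
          hence "coboundary D.SH 3 (\<lambda>xs. c xs - f0 n xs)"
            by (intro lemmaA1[OF _ _ D.SH_group]) (use prim' in simp_all)
          thus ?thesis using f0_cocycle[OF assms(1)] by blast
        qed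
      qed
    qed
  next
    assume noK: "\<nexists>K. klein_subgroup (dihedral n) K \<and> K \<subseteq> H"
    show "res_zero (dihedral n) H 3" unfolding res_zero_def
    proof (intro allI impI)
      fix f assume fc: "cocycle (dihedral n) 3 f"
      obtain u where u: "\<forall>a\<in>carrier (dihedral n). \<forall>b\<in>carrier (dihedral n). \<forall>c\<in>carrier (dihedral n). d2r (dihedral n) u a b c = f [a,b,c]"
        using primG fc by blast
      have primH: "\<forall>a\<in>carrier D.SH. \<forall>b\<in>carrier D.SH. \<forall>c\<in>carrier D.SH. d2r D.SH u a b c = f [a,b,c]"
        using u D.HG by (simp add: d2r_upd)
      have cocH: "d2r D.SH u a b c \<in> \<int>" if "a \<in> H" "b \<in> H" "c \<in> H" for a b c using primH that by simp
      have "splits D.SH u"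
      proof (cases "\<exists>k0. (k0, True) \<in> H")
        case False
        show ?thesis
        proof (rule D.H_cyclic_splits[OF _ cocH])
          fix g assume "g \<in> H" thus "\<not> snd g" using False by (cases g) auto
        qed
      next
        case True
        then obtain k0 where \<tau>H: "(k0, True) \<in> H" by blast
        have od: "odd D.m" using D.klein_from[OF \<tau>H] noK by blast
        show ?thesis by (rule D.H_dih_splits[OF \<tau>H]) (use cocH od in auto)
      qed
      thus "coboundary (dihedral n\<lparr>carrier := H\<rparr>) 3 f" by (rule lemmaA1[OF primH _ D.SH_group])
    qed
  qed
qed


end
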